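(* The Hopf algebra $H_{\operatorname{NAP}}$ is a free commutative algebra on the elements $\mathsf{F}_{[t]}$ where $t$ runs over the unlabeled rooted trees whose root has exactly one child (root-valence $1$).
   Context: $\Pi_{\operatorname{NAP}}(I)$ is the set of forests of rooted trees with vertex set exactly $I$, ordered by: $y$ covers $x$ iff $y$ is obtained from $x$ by adding an edge from the root of one component of $x$ to the root of another component (the latter root remaining the root); $\widehat{0}$ is the forest of one-vertex trees. For a rooted tree $t$ on $I$, $[\widehat{0},t]$ is an interval in $\Pi_{\operatorname{NAP}}(I)$, whose isomorphism class depends only on the unlabeled tree underlying $t$. $H_{\operatorname{NAP}}$ is the incidence Hopf algebra (Schmitt's construction) of this family: it has a basis $\mathsf{F}_{[Q]}$ indexed by isomorphism classes of finite products $Q$ of posets $[\widehat{0},t]$ ($t$ rooted trees), product $\mathsf{F}_{[Q]}\mathsf{F}_{[Q']}=\mathsf{F}_{[Q\times Q']}$, unit the class of the one-element poset, coproduct $\Delta\mathsf{F}_{[Q]}=\sum_{x\in Q}\mathsf{F}_{[\widehat{0},x]}\otimes\mathsf{F}_{[x,\widehat{1}]}$. We write $\mathsf{F}_{[t]}=\mathsf{F}_{[[\widehat{0},t]]}$. *)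

theory Defs
  imports Main "HOL-Library.Multiset"
begin

type_synonym forest = "(nat \<times> nat) set"   (* edges (child, parent) *)
type_synonym pelt = "forest list"
type_synonym poset = "pelt set \<times> (pelt \<Rightarrow> pelt \<Rightarrow> bool)"
type_synonym pclass = "poset set"

definition is_forest :: "nat set \<Rightarrow> forest \<Rightarrow> bool" where
  "is_forest I E \<longleftrightarrow> finite I \<and> E \<subseteq> I \<times> I \<and>
     (\<forall>v w w'. (v,w) \<in> E \<and> (v,w') \<in> E \<longrightarrow> w = w') \<and> (\<forall>v. (v,v) \<notin> E\<^sup>+)"

definition roots :: "nat set \<Rightarrow> forest \<Rightarrow> nat set" where
  "roots I E = {v \<in> I. \<forall>w. (v,w) \<notin> E}"

definition nap_covers :: "nat set \<Rightarrow> forest \<Rightarrow> forest \<Rightarrow> bool" where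
  "nap_covers I x y \<longleftrightarrow> (\<exists>r1 r2. r1 \<in> roots I x \<and> r2 \<in> roots I x \<and> r1 \<noteq> r2 \<and>
       y = insert (r1, r2) x)"

definition nap_le :: "nat set \<Rightarrow> forest \<Rightarrow> forest \<Rightarrow> bool" where
  "nap_le I x y \<longleftrightarrow> is_forest I x \<and> is_forest I y \<and> (nap_covers I)\<^sup>*\<^sup>* x y"

definition is_tree :: "nat set \<Rightarrow> forest \<Rightarrow> bool" where
  "is_tree I t \<longleftrightarrow> is_forest I t \<and> card (roots I t) = 1"

definition root_valence_one :: "nat set \<Rightarrow> forest \<Rightarrow> bool" where
  "root_valence_one I t \<longleftrightarrow> (\<exists>r. roots I t = {r} \<and> card {v. (v, r) \<in> t} = 1)"

definition prodI :: "(nat set \<times> forest) list \<Rightarrow> poset" where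
  "prodI ts = ({xs. length xs = length ts \<and>
        (\<forall>i<length ts. nap_le (fst (ts!i)) {} (xs!i) \<and> nap_le (fst (ts!i)) (xs!i) (snd (ts!i)))},
     \<lambda>xs ys. \<forall>i<length ts. nap_le (fst (ts!i)) (xs!i) (ys!i))"

definition poset_iso :: "poset \<Rightarrow> poset \<Rightarrow> bool" where
  "poset_iso P Q \<longleftrightarrow> (\<exists>f. bij_betw f (fst P) (fst Q) \<and>
      (\<forall>x\<in>fst P. \<forall>y\<in>fst P. snd P x y \<longleftrightarrow> snd Q (f x) (f y)))"

definition cls :: "poset \<Rightarrow> pclass" where
  "cls P = {Q. poset_iso P Q}"

definition tree_list :: "(nat set \<times> forest) list \<Rightarrow> bool" where
  "tree_list ts \<longleftrightarrow> (\<forall>p\<in>set ts. is_tree (fst p) (snd p))"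

definition nap_basis :: "pclass set" where
  "nap_basis = {cls (prodI ts) | ts. tree_list ts}"

definition rep :: "pclass \<Rightarrow> (nat set \<times> forest) list" where
  "rep A = (SOME ts. tree_list ts \<and> A = cls (prodI ts))"

definition cls_prod :: "pclass \<Rightarrow> pclass \<Rightarrow> pclass" where
  "cls_prod A B = cls (prodI (rep A @ rep B))"

definition HNAP :: "(pclass \<Rightarrow> 'k::field) set" where
  "HNAP = {h. finite {C. h C \<noteq> 0} \<and> {C. h C \<noteq> 0} \<subseteq> nap_basis}"

definition basisF :: "pclass \<Rightarrow> (pclass \<Rightarrow> 'k::field)" where
  "basisF C = (\<lambda>D. if D = C then 1 else 0)"

definition nap_mult :: "(pclass \<Rightarrow> 'k::field) \<Rightarrow> (pclass \<Rightarrow> 'k) \<Rightarrow> (pclass \<Rightarrow> 'k)" where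
  "nap_mult a b = (\<lambda>C. \<Sum>(A,B)\<in>{(A,B). a A \<noteq> 0 \<and> b B \<noteq> 0 \<and> cls_prod A B = C}. a A * b B)"

definition nap_one :: "pclass \<Rightarrow> 'k::field" where
  "nap_one = basisF (cls (prodI []))"

definition nap_gens :: "(pclass \<Rightarrow> 'k::field) set" where
  "nap_gens = {basisF (cls (prodI [(I, t)])) | I t. is_tree I t \<and> root_valence_one I t}"

definition monomial_of :: "('a \<Rightarrow> 'a \<Rightarrow> 'a) \<Rightarrow> 'a \<Rightarrow> 'a multiset \<Rightarrow> 'a" where
  "monomial_of mul one M = foldr mul (SOME xs. mset xs = M) one"

definition free_comm_alg_on ::
  "('i \<Rightarrow> 'k::field) set \<Rightarrow> (('i \<Rightarrow> 'k) \<Rightarrow> ('i \<Rightarrow> 'k) \<Rightarrow> ('i \<Rightarrow> 'k)) \<Rightarrow> ('i \<Rightarrow> 'k)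
     \<Rightarrow> ('i \<Rightarrow> 'k) set \<Rightarrow> bool" where
  "free_comm_alg_on H mul one G \<longleftrightarrow>
     (\<forall>a\<in>H. \<forall>b\<in>H. mul a b = mul b a) \<and>
     (\<forall>M. set_mset M \<subseteq> G \<longrightarrow> monomial_of mul one M \<in> H) \<and>
     (\<forall>S c. finite S \<and> S \<subseteq> {M. set_mset M \<subseteq> G} \<and>
        (\<lambda>x. \<Sum>M\<in>S. c M * monomial_of mul one M x) = (\<lambda>_. 0) \<longrightarrow> (\<forall>M\<in>S. c M = 0)) \<and>
     (\<forall>h\<in>H. \<exists>S c. finite S \<and> S \<subseteq> {M. set_mset M \<subseteq> G} \<and>
        h = (\<lambda>x. \<Sum>M\<in>S. c M * monomial_of mul one M x))"

end

theory Submission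
  imports Defs
begin


definition closedE :: "forest \<Rightarrow> forest \<Rightarrow> bool" where
  "closedE x y \<longleftrightarrow> (\<forall>v p u. (v,p) \<in> x \<longrightarrow> (u,v) \<in> y \<longrightarrow> (u,v) \<in> x)"

lemma forest_subset: "is_forest I y \<Longrightarrow> x \<subseteq> y \<Longrightarrow> is_forest I x"
  unfolding is_forest_def using trancl_mono by blast

lemma forest_finite: "is_forest I y \<Longrightarrow> finite y"
  unfolding is_forest_def using finite_subset finite_cartesian_product by blast

lemma forest_acyclic: "is_forest I y \<Longrightarrow> acyclic y"
  unfolding is_forest_def acyclic_def by blast

lemma covers_nec:
  assumes "(nap_covers I)\<^sup>*\<^sup>* x y"
  shows "x \<subseteq> y \<and> closedE x y"
  using assms
proof (induction rule: rtranclp_induct)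
  case base
  then show ?case by (simp add: closedE_def)
next
  case (step z z')
  then obtain r1 r2 where r: "r1 \<in> roots I z" "r2 \<in> roots I z" "z' = insert (r1, r2) z"
    unfolding nap_covers_def by blast
  have "closedE x z'"
    unfolding closedE_def
  proof (intro allI impI)
    fix v p u assume a: "(v,p) \<in> x" "(u,v) \<in> z'"
    show "(u,v) \<in> x"
    proof (cases "(u,v) \<in> z")
      case True then show ?thesis using step.IH a unfolding closedE_def by blast
    next
      case False
      then have "v = r2" using a r by auto
      then show ?thesis using a r step.IH unfolding roots_def by blast
    qed
  qed
  then show ?case using step r by auto
qed

lemma covers_suff:
  assumes "is_forest I y" "x \<subseteq> y" "closedE x y"
  shows "(nap_covers I)\<^sup>*\<^sup>* x y"
proof -
  have "\<And>y. is_forest I y \<Longrightarrow> x \<subseteq> y \<Longrightarrow> closedE x y \<Longrightarrow> card (y - x) = n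
        \<Longrightarrow> (nap_covers I)\<^sup>*\<^sup>* x y" for n
  proof (induction n)
    case 0
    then have "y = x" using forest_finite[OF 0(1)] by auto
    then show ?case by simp
  next
    case (Suc n)
    note fy = Suc.prems(1)
    have fin: "finite y" using forest_finite[OF fy] .
    define U where "U = {u. \<exists>w. (u,w) \<in> y - x}"
    have "U \<noteq> {}" using Suc.prems(4) unfolding U_def by (cases "y - x = {}") auto
    then obtain u0 where "u0 \<in> U" by blast
    have wf: "wf (y\<inverse>)" using finite_acyclic_wf_converse[OF fin forest_acyclic[OF fy]] .
    obtain u where uU: "u \<in> U" and umin: "\<And>z. (z,u) \<in> y\<inverse> \<Longrightarrow> z \<notin> U"
      using wfE_min[OF wf \<open>u0 \<in> U\<close>] by blast
    obtain w where uw: "(u,w) \<in> y" "(u,w) \<notin> x" using uU U_def by blast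
    have wroot: "\<forall>w'. (w,w') \<notin> y"
    proof (intro allI notI)
      fix w' assume "(w,w') \<in> y"
      then have "(w,w') \<in> x" using umin[of w] uw(1) U_def by auto
      then show False using Suc.prems(3) uw unfolding closedE_def by blast
    qed
    define y' where "y' = y - {(u,w)}"
    have fy': "is_forest I y'" using forest_subset[OF fy] y'_def by blast
    have "x \<subseteq> y'" using Suc.prems(2) uw y'_def by blast
    moreover have "closedE x y'" using Suc.prems(3) unfolding closedE_def y'_def by blast
    moreover have "card (y' - x) = n"
    proof -
      have "y' - x = (y - x) - {(u,w)}" using y'_def by blast
      then show ?thesis using Suc.prems(4) uw fin by (simp add: card_Diff_singleton)
    qed
    ultimately have IH: "(nap_covers I)\<^sup>*\<^sup>* x y'" using Suc.IH fy' by blast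
    have uI: "u \<in> I" "w \<in> I" using fy uw unfolding is_forest_def by auto
    have "nap_covers I y' y"
      unfolding nap_covers_def
    proof (intro exI conjI)
      show "u \<in> roots I y'" using uI fy uw unfolding roots_def y'_def is_forest_def by blast
      show "w \<in> roots I y'" using uI wroot unfolding roots_def y'_def by blast
      show "u \<noteq> w" using fy uw unfolding is_forest_def by blast
      show "y = insert (u, w) y'" using uw y'_def by blast
    qed
    then show ?case using IH by simp
  qed
  then show ?thesis using assms by blast
qed

lemma le_char:
  assumes "is_forest I y"
  shows "nap_le I x y \<longleftrightarrow> x \<subseteq> y \<and> closedE x y"
  using covers_nec covers_suff forest_subset assms unfolding nap_le_def by blast



definition Dset :: "forest \<Rightarrow> forest set" where
  "Dset t = {x. x \<subseteq> t \<and> closedE x t}"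

definition prodD :: "forest list \<Rightarrow> poset" where
  "prodD ts = ({xs. length xs = length ts \<and> (\<forall>i<length ts. xs!i \<in> Dset (ts!i))},
     \<lambda>xs ys. \<forall>i<length ts. xs!i \<subseteq> ys!i)"

lemma interval_char:
  assumes "is_forest I t"
  shows "(nap_le I {} x \<and> nap_le I x t) \<longleftrightarrow> x \<in> Dset t"
proof
  assume "nap_le I {} x \<and> nap_le I x t"
  then show "x \<in> Dset t" using le_char[OF assms] unfolding Dset_def by blast
next
  assume a: "x \<in> Dset t"
  then have fx: "is_forest I x" using forest_subset[OF assms] unfolding Dset_def by blast
  have "nap_le I {} x" using le_char[OF fx] by (simp add: closedE_def)
  then show "nap_le I {} x \<and> nap_le I x t" using le_char[OF assms] a unfolding Dset_def by blast
qed

lemma le_in_D: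
  assumes "is_forest I t" "x \<in> Dset t" "y \<in> Dset t"
  shows "nap_le I x y \<longleftrightarrow> x \<subseteq> y"
proof -
  have fy: "is_forest I y" using forest_subset[OF assms(1)] assms(3) unfolding Dset_def by blast
  have "closedE x y" using assms(2,3) unfolding Dset_def closedE_def by blast
  then show ?thesis using le_char[OF fy] by blast
qed

lemma iso_intro:
  assumes "\<And>x. x \<in> fst P \<Longrightarrow> f x \<in> fst Q" "\<And>y. y \<in> fst Q \<Longrightarrow> g y \<in> fst P"
    "\<And>x. x \<in> fst P \<Longrightarrow> g (f x) = x" "\<And>y. y \<in> fst Q \<Longrightarrow> f (g y) = y"
    "\<And>x y. x \<in> fst P \<Longrightarrow> y \<in> fst P \<Longrightarrow> snd P x y \<longleftrightarrow> snd Q (f x) (f y)"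
  shows "poset_iso P Q"
  unfolding poset_iso_def
proof (intro exI conjI)
  show "bij_betw f (fst P) (fst Q)" by (rule bij_betw_byWitness[where f'=g]) (use assms in auto)
qed (use assms in auto)

lemma iso_refl: "poset_iso P P"
  by (rule iso_intro[where f=id and g=id]) auto

lemma iso_sym: assumes "poset_iso P Q" shows "poset_iso Q P"
proof -
  obtain f where f: "bij_betw f (fst P) (fst Q)"
    "\<forall>x\<in>fst P. \<forall>y\<in>fst P. snd P x y \<longleftrightarrow> snd Q (f x) (f y)"
    using assms unfolding poset_iso_def by blast
  define g where "g = inv_into (fst P) f"
  have "bij_betw g (fst Q) (fst P)" using f(1) g_def by (simp add: bij_betw_inv_into)
  moreover have "\<forall>x\<in>fst Q. \<forall>y\<in>fst Q. snd Q x y \<longleftrightarrow> snd P (g x) (g y)"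
  proof (intro ballI)
    fix x y assume "x \<in> fst Q" "y \<in> fst Q"
    moreover then have "g x \<in> fst P" "g y \<in> fst P" "f (g x) = x" "f (g y) = y"
      using f(1) g_def by (auto simp: bij_betw_def inv_into_into f_inv_into_f)
    ultimately show "snd Q x y \<longleftrightarrow> snd P (g x) (g y)" using f(2) by metis
  qed
  ultimately show ?thesis unfolding poset_iso_def by blast
qed

lemma iso_trans: assumes "poset_iso P Q" "poset_iso Q R" shows "poset_iso P R"
proof -
  obtain f where f: "bij_betw f (fst P) (fst Q)"
    "\<forall>x\<in>fst P. \<forall>y\<in>fst P. snd P x y \<longleftrightarrow> snd Q (f x) (f y)"
    using assms unfolding poset_iso_def by blast
  obtain g where g: "bij_betw g (fst Q) (fst R)"
    "\<forall>x\<in>fst Q. \<forall>y\<in>fst Q. snd Q x y \<longleftrightarrow> snd R (g x) (g y)"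
    using assms unfolding poset_iso_def by blast
  have "bij_betw (g \<circ> f) (fst P) (fst R)" using f g bij_betw_trans by blast
  moreover have "\<forall>x\<in>fst P. \<forall>y\<in>fst P. snd P x y \<longleftrightarrow> snd R ((g\<circ>f) x) ((g\<circ>f) y)"
  proof (intro ballI)
    fix x y assume xy: "x \<in> fst P" "y \<in> fst P"
    then have "f x \<in> fst Q" "f y \<in> fst Q" using f(1) by (auto simp: bij_betw_def)
    then show "snd P x y \<longleftrightarrow> snd R ((g\<circ>f) x) ((g\<circ>f) y)" using f(2) g(2) xy by simp
  qed
  ultimately show ?thesis unfolding poset_iso_def by blast
qed

lemma cls_eq_iff: "cls P = cls Q \<longleftrightarrow> poset_iso P Q"
proof
  assume "cls P = cls Q"
  then have "Q \<in> cls P" using iso_refl unfolding cls_def by blast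
  then show "poset_iso P Q" unfolding cls_def by blast
next
  assume "poset_iso P Q"
  then show "cls P = cls Q" unfolding cls_def using iso_trans iso_sym by blast
qed

lemma prodI_prodD:
  assumes "tree_list ts"
  shows "poset_iso (prodI ts) (prodD (map snd ts))"
proof -
  have F: "\<And>i. i < length ts \<Longrightarrow> is_forest (fst (ts!i)) (snd (ts!i))"
    using assms unfolding tree_list_def is_tree_def by auto
  have C: "fst (prodI ts) = fst (prodD (map snd ts))"
    unfolding prodI_def prodD_def using interval_char[OF F] by auto
  show ?thesis
  proof (rule iso_intro[where f=id and g=id])
    fix x y assume "x \<in> fst (prodI ts)" "y \<in> fst (prodI ts)"
    then have D: "\<And>i. i < length ts \<Longrightarrow> x!i \<in> Dset (snd (ts!i)) \<and> y!i \<in> Dset (snd (ts!i))"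
      using C unfolding prodD_def by auto
    have "(\<forall>i<length ts. nap_le (fst (ts!i)) (x!i) (y!i)) \<longleftrightarrow> (\<forall>i<length ts. x!i \<subseteq> y!i)"
      using le_in_D[OF F] D by blast
    then show "snd (prodI ts) x y = snd (prodD (map snd ts)) (id x) (id y)"
      unfolding prodI_def prodD_def by simp
  qed (use C in auto)
qed

lemma prodD_append_carrier:
  "xs \<in> fst (prodD (ts @ ss)) \<longleftrightarrow> length xs = length ts + length ss \<and>
     take (length ts) xs \<in> fst (prodD ts) \<and> drop (length ts) xs \<in> fst (prodD ss)"
proof
  assume a: "xs \<in> fst (prodD (ts @ ss))"
  then have l: "length xs = length ts + length ss" unfolding prodD_def by auto
  have "\<forall>i<length ts. take (length ts) xs ! i \<in> Dset (ts ! i)"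
  proof (intro allI impI)
    fix i assume "i < length ts"
    moreover have "i < length (ts @ ss)" using \<open>i < length ts\<close> by simp
    ultimately have "xs ! i \<in> Dset ((ts@ss) ! i)" using a unfolding prodD_def by auto
    then show "take (length ts) xs ! i \<in> Dset (ts ! i)"
      using \<open>i < length ts\<close> by (simp add: nth_append_left)
  qed
  moreover have "\<forall>i<length ss. drop (length ts) xs ! i \<in> Dset (ss ! i)"
  proof (intro allI impI)
    fix i assume "i < length ss"
    then have "length ts + i < length (ts @ ss)" by simp
    moreover have "\<forall>i<length (ts@ss). xs ! i \<in> Dset ((ts@ss) ! i)" using a unfolding prodD_def by simp
    ultimately have "xs ! (length ts + i) \<in> Dset ((ts@ss) ! (length ts + i))" by blast
    then show "drop (length ts) xs ! i \<in> Dset (ss ! i)" using l by (simp add: nth_append)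
  qed
  ultimately show "length xs = length ts + length ss \<and>
     take (length ts) xs \<in> fst (prodD ts) \<and> drop (length ts) xs \<in> fst (prodD ss)"
    using l unfolding prodD_def by auto
next
  assume a: "length xs = length ts + length ss \<and>
     take (length ts) xs \<in> fst (prodD ts) \<and> drop (length ts) xs \<in> fst (prodD ss)"
  have "\<forall>i<length (ts@ss). xs ! i \<in> Dset ((ts@ss) ! i)"
  proof (intro allI impI)
    fix i assume i: "i < length (ts@ss)"
    show "xs ! i \<in> Dset ((ts@ss) ! i)"
    proof (cases "i < length ts")
      case True
      then show ?thesis using a unfolding prodD_def by (auto simp: nth_append)
    next
      case False
      then have "i - length ts < length ss" using i by simp
      then have "drop (length ts) xs ! (i - length ts) \<in> Dset (ss ! (i - length ts))"
        using a unfolding prodD_def by auto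
      then show ?thesis using False a by (simp add: nth_append)
    qed
  qed
  then show "xs \<in> fst (prodD (ts @ ss))" using a unfolding prodD_def by auto
qed

lemma prodD_append_rel:
  assumes "length xs = length ts + length ss" "length ys = length ts + length ss"
  shows "snd (prodD (ts @ ss)) xs ys \<longleftrightarrow>
     snd (prodD ts) (take (length ts) xs) (take (length ts) ys) \<and>
     snd (prodD ss) (drop (length ts) xs) (drop (length ts) ys)"
proof -
  have "(\<forall>i<length ts + length ss. xs!i \<subseteq> ys!i) \<longleftrightarrow>
    (\<forall>i<length ts. xs!i \<subseteq> ys!i) \<and> (\<forall>i<length ss. xs!(length ts + i) \<subseteq> ys!(length ts + i))"
  proof
    assume H: "\<forall>i<length ts + length ss. xs!i \<subseteq> ys!i"
    show "(\<forall>i<length ts. xs!i \<subseteq> ys!i) \<and> (\<forall>i<length ss. xs!(length ts + i) \<subseteq> ys!(length ts + i))"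
    proof
      show "\<forall>i<length ts. xs!i \<subseteq> ys!i" using H by simp
      show "\<forall>i<length ss. xs!(length ts + i) \<subseteq> ys!(length ts + i)" using H by simp
    qed
  next
    assume H: "(\<forall>i<length ts. xs!i \<subseteq> ys!i) \<and> (\<forall>i<length ss. xs!(length ts + i) \<subseteq> ys!(length ts + i))"
    show "\<forall>i<length ts + length ss. xs!i \<subseteq> ys!i"
    proof (intro allI impI)
      fix i assume i: "i < length ts + length ss"
      show "xs!i \<subseteq> ys!i"
      proof (cases "i < length ts")
        case True then show ?thesis using H by simp
      next
        case False
        then obtain j where "i = length ts + j" "j < length ss" using i
          by (metis add_less_cancel_left le_add_diff_inverse not_less)
        then show ?thesis using H by simp
      qed
    qed
  qed
  then show ?thesis using assms unfolding prodD_def by simp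
qed

lemma prodD_len: "xs \<in> fst (prodD ts) \<Longrightarrow> length xs = length ts"
  unfolding prodD_def by auto

lemma take_drop_carrier:
  assumes "a \<in> fst (prodD ts)" "b \<in> fst (prodD ss)"
  shows "a @ b \<in> fst (prodD (ts @ ss))"
  using assms prodD_len[OF assms(1)] prodD_len[OF assms(2)]
  by (simp add: prodD_append_carrier)

lemma iso_append:
  assumes "poset_iso (prodD ts) (prodD ts')" "poset_iso (prodD ss) (prodD ss')"
  shows "poset_iso (prodD (ts @ ss)) (prodD (ts' @ ss'))"
proof -
  obtain f where f: "bij_betw f (fst (prodD ts)) (fst (prodD ts'))"
    "\<forall>x\<in>fst (prodD ts). \<forall>y\<in>fst (prodD ts). snd (prodD ts) x y \<longleftrightarrow> snd (prodD ts') (f x) (f y)"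
    using assms unfolding poset_iso_def by blast
  obtain g where g: "bij_betw g (fst (prodD ss)) (fst (prodD ss'))"
    "\<forall>x\<in>fst (prodD ss). \<forall>y\<in>fst (prodD ss). snd (prodD ss) x y \<longleftrightarrow> snd (prodD ss') (g x) (g y)"
    using assms unfolding poset_iso_def by blast
  define f' where "f' = inv_into (fst (prodD ts)) f"
  define g' where "g' = inv_into (fst (prodD ss)) g"
  have fm: "\<And>x. x \<in> fst (prodD ts) \<Longrightarrow> f x \<in> fst (prodD ts')" using f(1) by (auto simp: bij_betw_def)
  have gm: "\<And>x. x \<in> fst (prodD ss) \<Longrightarrow> g x \<in> fst (prodD ss')" using g(1) by (auto simp: bij_betw_def)
  have fm': "\<And>x. x \<in> fst (prodD ts') \<Longrightarrow> f' x \<in> fst (prodD ts)"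
    using f(1) f'_def by (metis bij_betw_def inv_into_into)
  have gm': "\<And>x. x \<in> fst (prodD ss') \<Longrightarrow> g' x \<in> fst (prodD ss)"
    using g(1) g'_def by (metis bij_betw_def inv_into_into)
  have ff: "\<And>x. x \<in> fst (prodD ts) \<Longrightarrow> f' (f x) = x" using f(1) f'_def by (simp add: bij_betw_def)
  have gg: "\<And>x. x \<in> fst (prodD ss) \<Longrightarrow> g' (g x) = x" using g(1) g'_def by (simp add: bij_betw_def)
  have ff': "\<And>x. x \<in> fst (prodD ts') \<Longrightarrow> f (f' x) = x" using f(1) f'_def
    by (simp add: bij_betw_def f_inv_into_f)
  have gg': "\<And>x. x \<in> fst (prodD ss') \<Longrightarrow> g (g' x) = x" using g(1) g'_def
    by (simp add: bij_betw_def f_inv_into_f)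
  let ?n = "length ts" and ?n' = "length ts'"
  show ?thesis
  proof (rule iso_intro[where f="\<lambda>xs. f (take ?n xs) @ g (drop ?n xs)"
        and g="\<lambda>xs. f' (take ?n' xs) @ g' (drop ?n' xs)"])
    fix x assume x: "x \<in> fst (prodD (ts @ ss))"
    then have x': "take ?n x \<in> fst (prodD ts)" "drop ?n x \<in> fst (prodD ss)"
      using prodD_append_carrier by blast+
    show "f (take ?n x) @ g (drop ?n x) \<in> fst (prodD (ts' @ ss'))"
      using take_drop_carrier fm gm x' by blast
    have l: "length (f (take ?n x)) = ?n'" using prodD_len fm x' by blast
    show "f' (take ?n' (f (take ?n x) @ g (drop ?n x))) @ g' (drop ?n' (f (take ?n x) @ g (drop ?n x))) = x"
      using l ff gg x' by simp
  next
    fix x assume x: "x \<in> fst (prodD (ts' @ ss'))"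
    then have x': "take ?n' x \<in> fst (prodD ts')" "drop ?n' x \<in> fst (prodD ss')"
      using prodD_append_carrier by blast+
    show "f' (take ?n' x) @ g' (drop ?n' x) \<in> fst (prodD (ts @ ss))"
      using take_drop_carrier fm' gm' x' by blast
    have l: "length (f' (take ?n' x)) = ?n" using prodD_len fm' x' by blast
    show "f (take ?n (f' (take ?n' x) @ g' (drop ?n' x))) @ g (drop ?n (f' (take ?n' x) @ g' (drop ?n' x))) = x"
      using l ff' gg' x' by simp
  next
    fix x y assume x: "x \<in> fst (prodD (ts @ ss))" and y: "y \<in> fst (prodD (ts @ ss))"
    then have x': "take ?n x \<in> fst (prodD ts)" "drop ?n x \<in> fst (prodD ss)"
      and y': "take ?n y \<in> fst (prodD ts)" "drop ?n y \<in> fst (prodD ss)"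
      using prodD_append_carrier by blast+
    have lx: "length x = ?n + length ss" "length y = ?n + length ss"
      using x y prodD_append_carrier by blast+
    have lfx: "length (f (take ?n x) @ g (drop ?n x)) = ?n' + length ss'"
      "length (f (take ?n y) @ g (drop ?n y)) = ?n' + length ss'"
      using prodD_len[OF fm[OF x'(1)]] prodD_len[OF gm[OF x'(2)]]
        prodD_len[OF fm[OF y'(1)]] prodD_len[OF gm[OF y'(2)]] by auto
    have l1: "length (f (take ?n x)) = ?n'" "length (f (take ?n y)) = ?n'"
      using fm x' y' prodD_len by auto
    show "snd (prodD (ts @ ss)) x y =
      snd (prodD (ts' @ ss')) (f (take ?n x) @ g (drop ?n x)) (f (take ?n y) @ g (drop ?n y))"
      unfolding prodD_append_rel[OF lx] prodD_append_rel[OF lfx] using l1 f(2) g(2) x' y' by simp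
  qed
qed

lemma iso_swap: "poset_iso (prodD (ts @ ss)) (prodD (ss @ ts))"
proof -
  let ?n = "length ts" and ?m = "length ss"
  show ?thesis
  proof (rule iso_intro[where f="\<lambda>xs. drop ?n xs @ take ?n xs" and g="\<lambda>xs. drop ?m xs @ take ?m xs"])
    fix x assume x: "x \<in> fst (prodD (ts @ ss))"
    then show "drop ?n x @ take ?n x \<in> fst (prodD (ss @ ts))"
      using prodD_append_carrier take_drop_carrier by blast
    have "length x = ?n + ?m" using x prodD_append_carrier by blast
    then show "drop ?m (drop ?n x @ take ?n x) @ take ?m (drop ?n x @ take ?n x) = x" by simp
  next
    fix x assume x: "x \<in> fst (prodD (ss @ ts))"
    then show "drop ?m x @ take ?m x \<in> fst (prodD (ts @ ss))"
      using prodD_append_carrier take_drop_carrier by blast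
    have "length x = ?m + ?n" using x prodD_append_carrier by blast
    then show "drop ?n (drop ?m x @ take ?m x) @ take ?n (drop ?m x @ take ?m x) = x" by simp
  next
    fix x y assume x: "x \<in> fst (prodD (ts @ ss))" and y: "y \<in> fst (prodD (ts @ ss))"
    have lx: "length x = ?n + ?m" "length y = ?n + ?m" using x y prodD_append_carrier by blast+
    have lx': "length (drop ?n x @ take ?n x) = ?m + ?n" "length (drop ?n y @ take ?n y) = ?m + ?n"
      using lx by auto
    show "snd (prodD (ts @ ss)) x y = snd (prodD (ss @ ts)) (drop ?n x @ take ?n x) (drop ?n y @ take ?n y)"
      unfolding prodD_append_rel[OF lx] prodD_append_rel[OF lx'] using lx by auto
  qed
qed



lemma tree_root: "is_tree I t \<Longrightarrow> \<exists>r. roots I t = {r}"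
  unfolding is_tree_def by (meson card_1_singletonE)

lemma tree_reach:
  assumes "is_tree I t" "roots I t = {r}" "v \<in> I"
  shows "(v, r) \<in> t\<^sup>*"
proof -
  have ft: "is_forest I t" using assms(1) unfolding is_tree_def by blast
  have wf: "wf (t\<inverse>)" using finite_acyclic_wf_converse[OF forest_finite[OF ft] forest_acyclic[OF ft]] .
  have "v \<in> I \<longrightarrow> (v, r) \<in> t\<^sup>*"
  proof (induction v rule: wf_induct_rule[OF wf])
    case (1 v)
    show ?case
    proof
      assume vI: "v \<in> I"
      show "(v, r) \<in> t\<^sup>*"
      proof (cases "\<exists>w. (v,w) \<in> t")
        case True
        then obtain w where vw: "(v,w) \<in> t" by blast
        then have "w \<in> I" using ft unfolding is_forest_def by blast
        then have "(w,r) \<in> t\<^sup>*" using 1 vw by blast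
        then show ?thesis using vw by (meson converse_rtrancl_into_rtrancl)
      next
        case False
        then have "v \<in> roots I t" using vI unfolding roots_def by blast
        then show ?thesis using assms(2) by simp
      qed
    qed
  qed
  then show ?thesis using assms(3) by blast
qed

definition good :: "forest \<Rightarrow> bool" where
  "good t \<longleftrightarrow> t \<in> Dset t \<and> (\<exists>a. a \<in> Dset t \<and> a \<noteq> t \<and> (\<forall>x\<in>Dset t. x \<noteq> t \<longrightarrow> x \<subseteq> a))"

lemma t_in_Dset: "t \<in> Dset t"
  unfolding Dset_def closedE_def by blast

lemma valence_one_good:
  assumes "is_tree I t" "root_valence_one I t"
  shows "good t"
proof -
  have ft: "is_forest I t" using assms(1) unfolding is_tree_def by blast
  obtain r where r: "roots I t = {r}" "card {v. (v, r) \<in> t} = 1"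
    using assms(2) unfolding root_valence_one_def by blast
  obtain c where c: "{v. (v, r) \<in> t} = {c}" using r(2) by (meson card_1_singletonE)
  define a where "a = t - {(c,r)}"
  have crt: "(c,r) \<in> t" using c by blast
  have aD: "a \<in> Dset t"
    unfolding Dset_def closedE_def a_def
  proof (intro CollectI conjI allI impI)
    fix v p u assume "(v, p) \<in> t - {(c, r)}" "(u, v) \<in> t"
    moreover have "r \<in> roots I t" using r by simp
    ultimately show "(u, v) \<in> t - {(c, r)}" unfolding roots_def by blast
  qed blast
  have ant: "a \<noteq> t" using crt a_def by blast
  have cov: "\<forall>x\<in>Dset t. x \<noteq> t \<longrightarrow> x \<subseteq> a"
  proof (intro ballI impI)
    fix x assume xD: "x \<in> Dset t" and xt: "x \<noteq> t"
    show "x \<subseteq> a"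
    proof (rule ccontr)
      assume "\<not> x \<subseteq> a"
      then have crx: "(c,r) \<in> x" using xD unfolding a_def Dset_def by blast
      have cl: "closedE x t" using xD unfolding Dset_def by blast
      have "t \<subseteq> x"
      proof
        fix e assume et: "e \<in> t"
        obtain u w where e: "e = (u,w)" by (cases e)
        have "w \<in> I" using et e ft unfolding is_forest_def by blast
        then have wr: "(w, r) \<in> t\<^sup>*" using tree_reach[OF assms(1) r(1)] by blast
        have "\<forall>u. (u,w) \<in> t \<longrightarrow> (u,w) \<in> x"
          using wr
        proof (induction rule: converse_rtrancl_induct)
          case base
          show ?case
          proof (intro allI impI)
            fix u assume "(u,r) \<in> t"
            then have "u \<in> {v. (v,r) \<in> t}" by simp
            then have "u = c" using c by simp
            then show "(u,r) \<in> x" using crx by simp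
          qed
        next
          case (step w w')
          then show ?case using cl unfolding closedE_def by blast
        qed
        then show "e \<in> x" using et e by blast
      qed
      then show False using xt xD unfolding Dset_def by blast
    qed
  qed
  show ?thesis unfolding good_def using t_in_Dset aD ant cov by blast
qed



definition coat :: "poset \<Rightarrow> pelt \<Rightarrow> pelt \<Rightarrow> bool" where
  "coat P T A \<longleftrightarrow> A \<in> fst P \<and> A \<noteq> T \<and> (\<forall>y\<in>fst P. snd P A y \<longrightarrow> y = A \<or> y = T)"

definition Sset :: "poset \<Rightarrow> pelt \<Rightarrow> pelt \<Rightarrow> pelt set" where
  "Sset P T A = {y\<in>fst P. \<forall>B. coat P T B \<and> B \<noteq> A \<longrightarrow> \<not> snd P y B}"

lemma iso_top:
  assumes f: "bij_betw f (fst P) (fst Q)" "\<forall>x\<in>fst P. \<forall>y\<in>fst P. snd P x y \<longleftrightarrow> snd Q (f x) (f y)"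
    and T: "T \<in> fst P" "\<forall>y\<in>fst P. snd P y T"
    and T': "T' \<in> fst Q" "\<forall>y\<in>fst Q. snd Q y T'"
    and anti: "\<forall>x\<in>fst Q. \<forall>y\<in>fst Q. snd Q x y \<longrightarrow> snd Q y x \<longrightarrow> x = y"
  shows "f T = T'"
proof -
  have fT: "f T \<in> fst Q" using f T by (auto simp: bij_betw_def)
  have "T' \<in> f ` fst P" using T' f(1) by (simp add: bij_betw_def)
  then obtain x where x: "x \<in> fst P" "T' = f x" by blast
  have "snd P x T" using T x by blast
  then have "snd Q T' (f T)" using x f(2) T by blast
  moreover have "snd Q (f T) T'" using T' fT by auto
  ultimately show ?thesis using anti fT T' by blast
qed

lemma iso_coat:
  assumes f: "bij_betw f (fst P) (fst Q)" "\<forall>x\<in>fst P. \<forall>y\<in>fst P. snd P x y \<longleftrightarrow> snd Q (f x) (f y)"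
    and T: "T \<in> fst P" and A: "A \<in> fst P"
  shows "coat P T A \<longleftrightarrow> coat Q (f T) (f A)"
proof -
  have inj: "\<And>x y. x \<in> fst P \<Longrightarrow> y \<in> fst P \<Longrightarrow> f x = f y \<longleftrightarrow> x = y"
    using f(1) unfolding bij_betw_def inj_on_def by blast
  have im: "fst Q = f ` fst P" using f(1) by (simp add: bij_betw_def)
  have fA: "f A \<in> fst Q" using A im by simp
  have "(\<forall>y\<in>fst P. snd P A y \<longrightarrow> y = A \<or> y = T) \<longleftrightarrow>
        (\<forall>y\<in>fst Q. snd Q (f A) y \<longrightarrow> y = f A \<or> y = f T)"
  proof
    assume H: "\<forall>y\<in>fst P. snd P A y \<longrightarrow> y = A \<or> y = T"
    show "\<forall>y\<in>fst Q. snd Q (f A) y \<longrightarrow> y = f A \<or> y = f T"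
    proof (intro ballI impI)
      fix y assume y: "y \<in> fst Q" "snd Q (f A) y"
      then have "y \<in> f ` fst P" using im by simp
      then obtain x where x: "x \<in> fst P" "y = f x" by (rule imageE) simp
      then have x3: "snd Q (f A) (f x)" using y by simp
      have "snd P A x" using f(2) A x(1) x3 by blast
      then have "x = A \<or> x = T" using H x(1) by blast
      then show "y = f A \<or> y = f T" using x by blast
    qed
  next
    assume H: "\<forall>y\<in>fst Q. snd Q (f A) y \<longrightarrow> y = f A \<or> y = f T"
    show "\<forall>y\<in>fst P. snd P A y \<longrightarrow> y = A \<or> y = T"
    proof (intro ballI impI)
      fix y assume y: "y \<in> fst P" "snd P A y"
      then have "f y \<in> fst Q" using im by simp
      moreover have "snd Q (f A) (f y)" using f(2) A y by blast
      ultimately have "f y = f A \<or> f y = f T" using H by blast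
      then show "y = A \<or> y = T" using inj[OF y(1) A] inj[OF y(1) T] by simp
    qed
  qed
  moreover have "A \<noteq> T \<longleftrightarrow> f A \<noteq> f T" using inj[OF A T] by simp
  ultimately show ?thesis unfolding coat_def using A fA by simp
qed

lemma iso_Sset:
  assumes f: "bij_betw f (fst P) (fst Q)" "\<forall>x\<in>fst P. \<forall>y\<in>fst P. snd P x y \<longleftrightarrow> snd Q (f x) (f y)"
    and T: "T \<in> fst P" and A: "A \<in> fst P"
  shows "f ` Sset P T A = Sset Q (f T) (f A)"
proof -
  have inj: "\<And>x y. x \<in> fst P \<Longrightarrow> y \<in> fst P \<Longrightarrow> f x = f y \<longleftrightarrow> x = y"
    using f(1) unfolding bij_betw_def inj_on_def by blast
  have im: "fst Q = f ` fst P" using f(1) by (simp add: bij_betw_def)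
  have cQ: "\<And>B'. coat Q (f T) B' \<Longrightarrow> \<exists>B\<in>fst P. B' = f B \<and> coat P T B"
  proof -
    fix B' assume c: "coat Q (f T) B'"
    then have "B' \<in> f ` fst P" using im unfolding coat_def by simp
    then obtain B where "B \<in> fst P" "B' = f B" by blast
    then show "\<exists>B\<in>fst P. B' = f B \<and> coat P T B" using iso_coat[OF f T] c by blast
  qed
  have key: "\<And>y. y \<in> fst P \<Longrightarrow> y \<in> Sset P T A \<longleftrightarrow> f y \<in> Sset Q (f T) (f A)"
  proof -
    fix y assume y: "y \<in> fst P"
    have fy: "f y \<in> fst Q" using y im by simp
    show "y \<in> Sset P T A \<longleftrightarrow> f y \<in> Sset Q (f T) (f A)"
    proof
      assume H: "y \<in> Sset P T A"
      show "f y \<in> Sset Q (f T) (f A)"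
        unfolding Sset_def
      proof (intro CollectI conjI allI impI fy)
        fix B' assume B': "coat Q (f T) B' \<and> B' \<noteq> f A"
        then obtain B where B: "B \<in> fst P" "B' = f B" "coat P T B" using cQ by blast
        then have "B \<noteq> A" using B' by blast
        then have "\<not> snd P y B" using H B unfolding Sset_def by blast
        then show "\<not> snd Q (f y) B'" using f(2) y B by blast
      qed
    next
      assume H: "f y \<in> Sset Q (f T) (f A)"
      show "y \<in> Sset P T A"
        unfolding Sset_def
      proof (intro CollectI conjI allI impI y)
        fix B assume B: "coat P T B \<and> B \<noteq> A"
        then have Bp: "B \<in> fst P" unfolding coat_def by blast
        then have "coat Q (f T) (f B)" "f B \<noteq> f A" using iso_coat[OF f T] B inj A by blast+
        then have "\<not> snd Q (f y) (f B)" using H unfolding Sset_def by blast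
        then show "\<not> snd P y B" using f(2) y Bp by blast
      qed
    qed
  qed
  have sub: "Sset P T A \<subseteq> fst P" "Sset Q (f T) (f A) \<subseteq> fst Q" unfolding Sset_def by auto
  show ?thesis
  proof
    show "f ` Sset P T A \<subseteq> Sset Q (f T) (f A)"
    proof
      fix z assume "z \<in> f ` Sset P T A"
      then obtain y where "y \<in> Sset P T A" "z = f y" by blast
      then show "z \<in> Sset Q (f T) (f A)" using key sub by blast
    qed
    show "Sset Q (f T) (f A) \<subseteq> f ` Sset P T A"
    proof
      fix z assume z: "z \<in> Sset Q (f T) (f A)"
      then have "z \<in> f ` fst P" using sub im by auto
      then obtain y where "y \<in> fst P" "z = f y" by blast
      then show "z \<in> f ` Sset P T A" using key z by blast
    qed
  qed
qed

lemma iso_Sset_iso: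
  assumes f: "bij_betw f (fst P) (fst Q)" "\<forall>x\<in>fst P. \<forall>y\<in>fst P. snd P x y \<longleftrightarrow> snd Q (f x) (f y)"
    and T: "T \<in> fst P" and A: "A \<in> fst P"
  shows "poset_iso (Sset P T A, snd P) (Sset Q (f T) (f A), snd Q)"
proof -
  have sub: "Sset P T A \<subseteq> fst P" unfolding Sset_def by auto
  have "bij_betw f (Sset P T A) (Sset Q (f T) (f A))"
    using iso_Sset[OF f T A] bij_betw_subset[OF f(1) sub] by simp
  then show ?thesis unfolding poset_iso_def using f(2) sub by auto
qed



definition coa :: "forest \<Rightarrow> forest" where
  "coa t = (SOME a. a \<in> Dset t \<and> a \<noteq> t \<and> (\<forall>x\<in>Dset t. x \<noteq> t \<longrightarrow> x \<subseteq> a))"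

lemma coa_props:
  assumes "good t"
  shows "coa t \<in> Dset t" "coa t \<noteq> t" "\<And>x. x \<in> Dset t \<Longrightarrow> x \<noteq> t \<Longrightarrow> x \<subseteq> coa t"
    "coa t \<subseteq> t" "\<not> t \<subseteq> coa t"
proof -
  have "\<exists>a. a \<in> Dset t \<and> a \<noteq> t \<and> (\<forall>x\<in>Dset t. x \<noteq> t \<longrightarrow> x \<subseteq> a)"
    using assms unfolding good_def by blast
  then have H: "coa t \<in> Dset t \<and> coa t \<noteq> t \<and> (\<forall>x\<in>Dset t. x \<noteq> t \<longrightarrow> x \<subseteq> coa t)"
    unfolding coa_def by (rule someI_ex)
  then show "coa t \<in> Dset t" "coa t \<noteq> t" "\<And>x. x \<in> Dset t \<Longrightarrow> x \<noteq> t \<Longrightarrow> x \<subseteq> coa t"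
    by auto
  show "coa t \<subseteq> t" using H unfolding Dset_def by blast
  then show "\<not> t \<subseteq> coa t" using H by blast
qed

lemma Dset_sub: "x \<in> Dset t \<Longrightarrow> x \<subseteq> t"
  unfolding Dset_def by blast

definition cA :: "forest list \<Rightarrow> nat \<Rightarrow> forest list" where
  "cA ts i = ts[i := coa (ts!i)]"

lemma prodD_mem: "xs \<in> fst (prodD ts) \<longleftrightarrow> length xs = length ts \<and> (\<forall>i<length ts. xs!i \<in> Dset (ts!i))"
  unfolding prodD_def by simp

lemma prodD_rel: "snd (prodD ts) xs ys \<longleftrightarrow> (\<forall>i<length ts. xs!i \<subseteq> ys!i)"
  unfolding prodD_def by simp

lemma top_mem: "ts \<in> fst (prodD ts)"
  unfolding prodD_mem using t_in_Dset by simp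

lemma top_top: "y \<in> fst (prodD ts) \<Longrightarrow> snd (prodD ts) y ts"
  unfolding prodD_mem prodD_rel using Dset_sub by blast

lemma prodD_antisym: "x \<in> fst (prodD ts) \<Longrightarrow> y \<in> fst (prodD ts) \<Longrightarrow> snd (prodD ts) x y \<Longrightarrow> snd (prodD ts) y x \<Longrightarrow> x = y"
  unfolding prodD_mem prodD_rel by (metis nth_equalityI subset_antisym)

context
  fixes ts :: "forest list"
  assumes G: "\<forall>t\<in>set ts. good t"
begin

lemma Gi: "i < length ts \<Longrightarrow> good (ts!i)"
  using G by simp

lemma cA_mem: "i < length ts \<Longrightarrow> cA ts i \<in> fst (prodD ts)"
  unfolding prodD_mem cA_def using coa_props(1)[OF Gi] t_in_Dset by (simp add: nth_list_update)

lemma cA_nth: "i < length ts \<Longrightarrow> j < length ts \<Longrightarrow> cA ts i ! j = (if j = i then coa (ts!i) else ts!j)"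
  unfolding cA_def by simp

lemma cA_ne: "i < length ts \<Longrightarrow> j < length ts \<Longrightarrow> cA ts i = cA ts j \<Longrightarrow> i = j"
proof (rule ccontr)
  assume a: "i < length ts" "j < length ts" "cA ts i = cA ts j" "i \<noteq> j"
  then have "cA ts i ! i = cA ts j ! i" by simp
  then have "coa (ts!i) = ts!i" using a cA_nth[OF a(1) a(1)] cA_nth[OF a(2) a(1)] by simp
  then show False using coa_props(2)[OF Gi[OF a(1)]] by simp
qed

lemma cA_ne_top: "i < length ts \<Longrightarrow> cA ts i \<noteq> ts"
proof
  assume a: "i < length ts" "cA ts i = ts"
  then have "cA ts i ! i = ts ! i" by simp
  then show False using a cA_nth[OF a(1) a(1)] coa_props(2)[OF Gi[OF a(1)]] by simp
qed

lemma coat_char: "coat (prodD ts) ts B \<longleftrightarrow> (\<exists>i<length ts. B = cA ts i)"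
proof
  assume c: "coat (prodD ts) ts B"
  then have B: "B \<in> fst (prodD ts)" "B \<noteq> ts" unfolding coat_def by auto
  have lB: "length B = length ts" using B prodD_mem by blast
  have "\<exists>i<length ts. B!i \<noteq> ts!i"
  proof (rule ccontr)
    assume "\<not> (\<exists>i<length ts. B!i \<noteq> ts!i)"
    then have "B = ts" using lB by (simp add: nth_equalityI)
    then show False using B(2) by simp
  qed
  then obtain i where i: "i < length ts" "B!i \<noteq> ts!i" by blast
  have BD: "\<And>j. j < length ts \<Longrightarrow> B!j \<in> Dset (ts!j)" using B(1) prodD_mem by blast
  have "B!i \<subseteq> coa (ts!i)" using coa_props(3)[OF Gi[OF i(1)]] i BD by blast
  then have "\<forall>j<length ts. B!j \<subseteq> cA ts i ! j"
    using cA_nth[OF i(1)] Dset_sub[OF BD] by simp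
  then have "snd (prodD ts) B (cA ts i)" unfolding prodD_rel .
  then have "cA ts i = B \<or> cA ts i = ts" using c cA_mem[OF i(1)] unfolding coat_def by blast
  then show "\<exists>i<length ts. B = cA ts i" using cA_ne_top[OF i(1)] i(1) by auto
next
  assume "\<exists>i<length ts. B = cA ts i"
  then obtain i where i: "i < length ts" "B = cA ts i" by blast
  have "\<forall>y\<in>fst (prodD ts). snd (prodD ts) B y \<longrightarrow> y = B \<or> y = ts"
  proof (intro ballI impI)
    fix y assume y: "y \<in> fst (prodD ts)" "snd (prodD ts) B y"
    have ly: "length y = length ts" using y prodD_mem by blast
    have yD: "\<And>j. j < length ts \<Longrightarrow> y!j \<in> Dset (ts!j)" using y prodD_mem by blast
    have yj: "\<And>j. j < length ts \<Longrightarrow> j \<noteq> i \<Longrightarrow> y!j = ts!j"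
    proof -
      fix j assume j: "j < length ts" "j \<noteq> i"
      have "cA ts i ! j \<subseteq> y!j" using y(2) j(1) i(2) unfolding prodD_rel by simp
      then have "ts!j \<subseteq> y!j" using cA_nth[OF i(1) j(1)] j(2) by simp
      then show "y!j = ts!j" using Dset_sub[OF yD[OF j(1)]] by blast
    qed
    show "y = B \<or> y = ts"
    proof (cases "y!i = ts!i")
      case True
      have "\<forall>j<length ts. y!j = ts!j"
      proof (intro allI impI)
        fix j assume "j < length ts"
        then show "y!j = ts!j" using yj True by (cases "j = i") auto
      qed
      then have "y = ts" using ly by (simp add: nth_equalityI)
      then show ?thesis by simp
    next
      case False
      then have "y!i \<subseteq> coa (ts!i)" using coa_props(3)[OF Gi[OF i(1)]] yD i by blast
      moreover have "cA ts i ! i \<subseteq> y!i" using y(2) i unfolding prodD_rel by simp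
      then have "coa (ts!i) \<subseteq> y!i" using cA_nth[OF i(1) i(1)] by simp
      ultimately have yi: "y!i = coa (ts!i)" by blast
      have "\<forall>j<length ts. y!j = B!j" using yj yi i cA_nth[OF i(1)] by simp
      moreover have "length B = length ts" using i unfolding cA_def by simp
      ultimately have "y = B" using ly by (simp add: nth_equalityI)
      then show ?thesis by simp
    qed
  qed
  moreover have "B \<in> fst (prodD ts)" "B \<noteq> ts" using cA_mem[OF i(1)] cA_ne_top[OF i(1)] i(2) by simp_all
  ultimately show "coat (prodD ts) ts B" unfolding coat_def by blast
qed

lemma Sset_char:
  assumes i: "i < length ts"
  shows "Sset (prodD ts) ts (cA ts i) = {ts[i := x] | x. x \<in> Dset (ts!i)}"
proof -
  have notle: "\<And>y j. y \<in> fst (prodD ts) \<Longrightarrow> j < length ts \<Longrightarrow>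
      \<not> snd (prodD ts) y (cA ts j) \<longleftrightarrow> y!j = ts!j"
  proof -
    fix y j assume y: "y \<in> fst (prodD ts)" and j: "j < length ts"
    have yD: "\<And>k. k < length ts \<Longrightarrow> y!k \<in> Dset (ts!k)" using y prodD_mem by blast
    have "snd (prodD ts) y (cA ts j) \<longleftrightarrow> y!j \<subseteq> coa (ts!j)"
    proof
      assume "snd (prodD ts) y (cA ts j)"
      then have "y!j \<subseteq> cA ts j ! j" using j unfolding prodD_rel by blast
      then show "y!j \<subseteq> coa (ts!j)" using cA_nth[OF j j] by simp
    next
      assume a: "y!j \<subseteq> coa (ts!j)"
      show "snd (prodD ts) y (cA ts j)" unfolding prodD_rel
      proof (intro allI impI)
        fix k assume k: "k < length ts"
        show "y!k \<subseteq> cA ts j ! k"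
          using cA_nth[OF j k] a Dset_sub[OF yD[OF k]] by simp
      qed
    qed
    also have "\<dots> \<longleftrightarrow> y!j \<noteq> ts!j"
    proof
      assume "y!j \<subseteq> coa (ts!j)"
      then show "y!j \<noteq> ts!j" using coa_props(5)[OF Gi[OF j]] by auto
    next
      assume "y!j \<noteq> ts!j"
      then show "y!j \<subseteq> coa (ts!j)" using coa_props(3)[OF Gi[OF j]] yD[OF j] by blast
    qed
    finally show "\<not> snd (prodD ts) y (cA ts j) \<longleftrightarrow> y!j = ts!j" by blast
  qed
  show ?thesis
  proof (intro set_eqI iffI)
    fix y assume yS: "y \<in> Sset (prodD ts) ts (cA ts i)"
    then have y: "y \<in> fst (prodD ts)" unfolding Sset_def by blast
    have yj': "\<And>j. j < length ts \<Longrightarrow> j \<noteq> i \<Longrightarrow> y!j = ts!j"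
    proof -
      fix j assume j: "j < length ts" "j \<noteq> i"
      have "coat (prodD ts) ts (cA ts j)" using coat_char j by blast
      moreover have "cA ts j \<noteq> cA ts i" using cA_ne j i by blast
      ultimately have "\<not> snd (prodD ts) y (cA ts j)" using yS unfolding Sset_def by blast
      then show "y!j = ts!j" using notle y j by blast
    qed
    moreover have "length y = length ts" "y!i \<in> Dset (ts!i)" using y i prodD_mem by auto
    ultimately have "y = ts[i := y!i]"
    proof (intro nth_equalityI)
      show "length y = length (ts[i := y!i])" using \<open>length y = length ts\<close> by simp
    next
      fix k assume "k < length y"
      then show "y!k = ts[i := y!i] ! k" using \<open>length y = length ts\<close> yj'
        by (cases "k = i") (simp_all add: nth_list_update)
    qed
    then show "y \<in> {ts[i := x] | x. x \<in> Dset (ts!i)}" using \<open>y!i \<in> Dset (ts!i)\<close> by blast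
  next
    fix y assume "y \<in> {ts[i := x] | x. x \<in> Dset (ts!i)}"
    then obtain x where x: "y = ts[i := x]" "x \<in> Dset (ts!i)" by blast
    have "\<forall>k<length ts. ts[i := x] ! k \<in> Dset (ts ! k)"
    proof (intro allI impI)
      fix k assume "k < length ts"
      then show "ts[i := x] ! k \<in> Dset (ts ! k)" using x(2) t_in_Dset
        by (cases "k = i") (simp_all add: nth_list_update)
    qed
    then have y: "y \<in> fst (prodD ts)" unfolding prodD_mem using x by simp
    show "y \<in> Sset (prodD ts) ts (cA ts i)"
      unfolding Sset_def
    proof (intro CollectI conjI allI impI y)
      fix B assume B: "coat (prodD ts) ts B \<and> B \<noteq> cA ts i"
      then obtain j where j: "j < length ts" "B = cA ts j" using coat_char by blast
      then have "j \<noteq> i" using B by blast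
      then have "y!j = ts!j" using x j by simp
      then show "\<not> snd (prodD ts) y B" using notle y j by blast
    qed
  qed
qed

lemma Sset_iso:
  assumes i: "i < length ts"
  shows "poset_iso (Sset (prodD ts) ts (cA ts i), snd (prodD ts)) (prodD [ts!i])"
proof (rule iso_intro[where f="\<lambda>y. [y!i]" and g="\<lambda>z. ts[i := hd z]"])
  fix y assume "y \<in> fst (Sset (prodD ts) ts (cA ts i), snd (prodD ts))"
  then obtain x where x: "y = ts[i := x]" "x \<in> Dset (ts!i)" using Sset_char[OF i] by auto
  show "[y!i] \<in> fst (prodD [ts!i])" using x i unfolding prodD_mem by simp
  show "ts[i := hd [y!i]] = y" using x i by simp
next
  fix z assume z: "z \<in> fst (prodD [ts!i])"
  then obtain x where x: "z = [x]" "x \<in> Dset (ts!i)" unfolding prodD_mem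
    by (metis One_nat_def length_0_conv length_Suc_conv less_one nth_Cons_0)
  show "ts[i := hd z] \<in> fst (Sset (prodD ts) ts (cA ts i), snd (prodD ts))"
    using Sset_char[OF i] x by auto
  show "[ts[i := hd z] ! i] = z" using x i by simp
next
  fix y y' assume "y \<in> fst (Sset (prodD ts) ts (cA ts i), snd (prodD ts))"
    "y' \<in> fst (Sset (prodD ts) ts (cA ts i), snd (prodD ts))"
  then obtain x x' where x: "y = ts[i := x]" "x \<in> Dset (ts!i)" and x': "y' = ts[i := x']" "x' \<in> Dset (ts!i)"
    using Sset_char[OF i] by auto
  have "(\<forall>j<length ts. y!j \<subseteq> y'!j) \<longleftrightarrow> x \<subseteq> x'"
    using x x' i by (auto simp: nth_list_update)
  then show "snd (Sset (prodD ts) ts (cA ts i), snd (prodD ts)) y y' =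
        snd (prodD [ts!i]) [y!i] [y'!i]"
    unfolding prodD_rel using x x' i by simp
qed

end

theorem uniq:
  assumes G: "\<forall>t\<in>set ts. good t" and G': "\<forall>s\<in>set ss. good s"
    and iso: "poset_iso (prodD ts) (prodD ss)"
  shows "\<exists>\<sigma>. bij_betw \<sigma> {..<length ts} {..<length ss} \<and>
           (\<forall>i<length ts. poset_iso (prodD [ts!i]) (prodD [ss!(\<sigma> i)]))"
proof -
  obtain f where f: "bij_betw f (fst (prodD ts)) (fst (prodD ss))"
    "\<forall>x\<in>fst (prodD ts). \<forall>y\<in>fst (prodD ts). snd (prodD ts) x y \<longleftrightarrow> snd (prodD ss) (f x) (f y)"
    using iso unfolding poset_iso_def by blast
  have fT: "f ts = ss"
    by (rule iso_top[OF f top_mem]) (use top_top top_mem prodD_antisym in auto)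
  have inj: "\<And>x y. x \<in> fst (prodD ts) \<Longrightarrow> y \<in> fst (prodD ts) \<Longrightarrow> f x = f y \<Longrightarrow> x = y"
    using f(1) unfolding bij_betw_def inj_on_def by blast
  have ex: "\<And>i. i < length ts \<Longrightarrow> \<exists>j. j < length ss \<and> f (cA ts i) = cA ss j"
  proof -
    fix i assume i: "i < length ts"
    have "coat (prodD ts) ts (cA ts i)" using coat_char[OF G] i by blast
    then have "coat (prodD ss) ss (f (cA ts i))"
      using iso_coat[OF f top_mem cA_mem[OF G i]] fT by simp
    then show "\<exists>j. j < length ss \<and> f (cA ts i) = cA ss j" using coat_char[OF G'] by blast
  qed
  define \<sigma> where "\<sigma> i = (SOME j. j < length ss \<and> f (cA ts i) = cA ss j)" for i
  have \<sigma>: "\<And>i. i < length ts \<Longrightarrow> \<sigma> i < length ss \<and> f (cA ts i) = cA ss (\<sigma> i)"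
    unfolding \<sigma>_def using ex by (rule someI_ex)
  have bij: "bij_betw \<sigma> {..<length ts} {..<length ss}"
    unfolding bij_betw_def
  proof
    show "inj_on \<sigma> {..<length ts}"
    proof (rule inj_onI)
      fix i i' assume ii: "i \<in> {..<length ts}" "i' \<in> {..<length ts}" "\<sigma> i = \<sigma> i'"
      then have "f (cA ts i) = f (cA ts i')" using \<sigma> by simp
      then have "cA ts i = cA ts i'" using inj cA_mem[OF G] ii by simp
      then show "i = i'" using cA_ne[OF G] ii by simp
    qed
    show "\<sigma> ` {..<length ts} = {..<length ss}"
    proof
      show "\<sigma> ` {..<length ts} \<subseteq> {..<length ss}" using \<sigma> by auto
      show "{..<length ss} \<subseteq> \<sigma> ` {..<length ts}"
      proof
        fix j assume j: "j \<in> {..<length ss}"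
        have c: "coat (prodD ss) ss (cA ss j)" using coat_char[OF G'] j by auto
        then have "cA ss j \<in> f ` fst (prodD ts)" using f(1) unfolding coat_def bij_betw_def by simp
        then obtain B where B: "B \<in> fst (prodD ts)" "cA ss j = f B" by blast
        then have "coat (prodD ts) ts B" using iso_coat[OF f top_mem B(1)] fT c by simp
        then obtain i where i: "i < length ts" "B = cA ts i" using coat_char[OF G] by blast
        then have "cA ss (\<sigma> i) = cA ss j" using \<sigma> B by simp
        then have "\<sigma> i = j" using cA_ne[OF G'] \<sigma> i j by simp
        then show "j \<in> \<sigma> ` {..<length ts}" using i by blast
      qed
    qed
  qed
  have "\<forall>i<length ts. poset_iso (prodD [ts!i]) (prodD [ss!(\<sigma> i)])"
  proof (intro allI impI)
    fix i assume i: "i < length ts"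
    have 1: "poset_iso (prodD [ts!i]) (Sset (prodD ts) ts (cA ts i), snd (prodD ts))"
      using iso_sym[OF Sset_iso[OF G i]] .
    have 2: "poset_iso (Sset (prodD ts) ts (cA ts i), snd (prodD ts))
                 (Sset (prodD ss) ss (cA ss (\<sigma> i)), snd (prodD ss))"
      using iso_Sset_iso[OF f top_mem cA_mem[OF G i]] fT \<sigma>[OF i] by simp
    have 3: "poset_iso (Sset (prodD ss) ss (cA ss (\<sigma> i)), snd (prodD ss)) (prodD [ss!(\<sigma> i)])"
      using Sset_iso[OF G'] \<sigma>[OF i] by blast
    show "poset_iso (prodD [ts!i]) (prodD [ss!(\<sigma> i)])" using 1 2 3 iso_trans by blast
  qed
  then show ?thesis using bij by blast
qed



definition branch :: "forest \<Rightarrow> nat \<Rightarrow> forest" where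
  "branch t c = {(u,w) \<in> t. (u,c) \<in> t\<^sup>*}"

lemma branch_sub: "branch t c \<subseteq> t"
  unfolding branch_def by blast

context
  fixes I t r
  assumes tr: "is_tree I t" and rt: "roots I t = {r}"
begin

lemma ft: "is_forest I t" using tr unfolding is_tree_def by blast

lemma sv: "single_valued t"
  using ft unfolding is_forest_def single_valued_def by blast

lemma func: "(v,w) \<in> t \<Longrightarrow> (v,w') \<in> t \<Longrightarrow> w = w'"
  using ft unfolding is_forest_def by blast

lemma r_noparent: "(r,w) \<notin> t"
  using rt unfolding roots_def by blast

lemma r_in: "r \<in> I" using rt unfolding roots_def by blast

lemma from_r: "(r,x) \<in> t\<^sup>* \<Longrightarrow> x = r"
  by (erule converse_rtranclE) (use r_noparent in auto)

lemma chainstep: "(v,r) \<in> t \<Longrightarrow> (v,x) \<in> t\<^sup>* \<Longrightarrow> x = v \<or> x = r"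
proof (erule converse_rtranclE)
  fix z assume "(v,r) \<in> t" "(v,z) \<in> t" "(z,x) \<in> t\<^sup>*"
  then have "z = r" using func by blast
  then show "x = v \<or> x = r" using from_r \<open>(z,x) \<in> t\<^sup>*\<close> by blast
qed simp

lemma child_ne: "(c,r) \<in> t \<Longrightarrow> c \<noteq> r"
  using r_noparent by blast

lemma fin_children: "finite {v. (v,r) \<in> t}"
proof -
  have "{v. (v,r) \<in> t} \<subseteq> fst ` t" by force
  then show ?thesis using forest_finite[OF ft] finite_subset by blast
qed

lemma branch_disj:
  assumes "(c,r) \<in> t" "(c',r) \<in> t" "c \<noteq> c'"
  shows "branch t c \<inter> branch t c' = {}"
proof (rule ccontr)
  assume "branch t c \<inter> branch t c' \<noteq> {}"
  then obtain u w where "(u,c) \<in> t\<^sup>*" "(u,c') \<in> t\<^sup>*" unfolding branch_def by blast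
  then have "(c,c') \<in> t\<^sup>* \<or> (c',c) \<in> t\<^sup>*" using single_valued_confluent[OF sv] by blast
  then show False
  proof
    assume "(c,c') \<in> t\<^sup>*"
    then have "c' = c \<or> c' = r" using chainstep assms(1) by blast
    then show False using assms child_ne by blast
  next
    assume "(c',c) \<in> t\<^sup>*"
    then have "c = c' \<or> c = r" using chainstep assms(2) by blast
    then show False using assms child_ne by blast
  qed
qed

lemma branch_cover:
  assumes "(u,w) \<in> t"
  shows "\<exists>c. (c,r) \<in> t \<and> (u,w) \<in> branch t c"
proof -
  have "w \<in> I" using assms ft unfolding is_forest_def by blast
  then have "(w,r) \<in> t\<^sup>*" using tree_reach[OF tr rt] by blast
  then have "(u,r) \<in> t\<^sup>+" using assms by (meson rtrancl_into_trancl2)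
  then obtain c where "(u,c) \<in> t\<^sup>*" "(c,r) \<in> t" using tranclD2 by metis
  then show ?thesis using assms unfolding branch_def by blast
qed

lemma branch_closed:
  "(u,v) \<in> t \<Longrightarrow> (v,p) \<in> branch t c \<Longrightarrow> (u,v) \<in> branch t c"
  unfolding branch_def by (blast intro: converse_rtrancl_into_rtrancl)

lemma branch_tree:
  assumes c: "(c,r) \<in> t"
  shows "is_tree (Field (branch t c)) (branch t c) \<and> root_valence_one (Field (branch t c)) (branch t c)"
proof -
  let ?b = "branch t c" and ?J = "Field (branch t c)"
  have bt: "?b \<subseteq> t" by (rule branch_sub)
  have crb: "(c,r) \<in> ?b" using c unfolding branch_def by blast
  have fb: "is_forest ?J ?b"
    unfolding is_forest_def
  proof (intro conjI)
    show "finite ?J" using forest_finite[OF ft] bt finite_subset finite_Field by blast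
    show "?b \<subseteq> ?J \<times> ?J" by (auto intro: FieldI1 FieldI2)
    show "\<forall>v w w'. (v, w) \<in> ?b \<and> (v, w') \<in> ?b \<longrightarrow> w = w'" using bt func by blast
    show "\<forall>v. (v, v) \<notin> ?b\<^sup>+" using ft bt trancl_mono unfolding is_forest_def by blast
  qed
  have roots: "roots ?J ?b = {r}"
  proof
    show "{r} \<subseteq> roots ?J ?b" using crb r_noparent bt unfolding roots_def by (auto intro: FieldI2)
    show "roots ?J ?b \<subseteq> {r}"
    proof
      fix v assume v: "v \<in> roots ?J ?b"
      show "v \<in> {r}"
      proof (rule ccontr)
        assume vr: "v \<notin> {r}"
        have "v \<in> ?J" using v unfolding roots_def by blast
        then obtain z where "(v,z) \<in> ?b \<or> (z,v) \<in> ?b" unfolding Field_def by blast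
        moreover have "\<not> (v,z) \<in> ?b" for z using v unfolding roots_def by blast
        ultimately obtain u where u: "(u,v) \<in> ?b" by blast
        then have uc: "(u,c) \<in> t\<^sup>*" "(u,v) \<in> t" unfolding branch_def by auto
        have vc: "(v,c) \<in> t\<^sup>*"
        proof (cases "u = c")
          case True
          then have "v = r" using uc c func by blast
          then show ?thesis using vr by blast
        next
          case False
          then have "(u,c) \<in> t\<^sup>+" using uc by (meson rtranclD)
          then obtain z where "(u,z) \<in> t" "(z,c) \<in> t\<^sup>*" using tranclD by metis
          then show ?thesis using uc func by blast
        qed
        have "v \<in> I" using uc ft unfolding is_forest_def by blast
        then have "(v,r) \<in> t\<^sup>*" using tree_reach[OF tr rt] by blast
        then have "(v,r) \<in> t\<^sup>+" using vr by (auto simp: rtrancl_eq_or_trancl)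
        then obtain z where "(v,z) \<in> t" using tranclD by metis
        then have "(v,z) \<in> ?b" using vc unfolding branch_def by blast
        then show False using v unfolding roots_def by blast
      qed
    qed
  qed
  have "{v. (v, r) \<in> ?b} = {c}"
  proof
    show "{c} \<subseteq> {v. (v, r) \<in> ?b}" using crb by blast
    show "{v. (v, r) \<in> ?b} \<subseteq> {c}"
    proof
      fix v assume "v \<in> {v. (v, r) \<in> ?b}"
      then have "(v,r) \<in> t" "(v,c) \<in> t\<^sup>*" unfolding branch_def by auto
      then have "c = v \<or> c = r" using chainstep by blast
      then show "v \<in> {c}" using child_ne[OF c] by auto
    qed
  qed
  then have "root_valence_one ?J ?b" unfolding root_valence_one_def using roots by auto
  moreover have "is_tree ?J ?b" unfolding is_tree_def using fb roots by simp
  ultimately show ?thesis by blast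
qed

definition cs :: "nat list" where "cs = sorted_list_of_set {v. (v,r) \<in> t}"
definition bs :: "forest list" where "bs = map (branch t) cs"

lemma cs_set: "set cs = {v. (v,r) \<in> t}" unfolding cs_def using fin_children by simp
lemma cs_dist: "distinct cs" unfolding cs_def by simp

lemma bs_disj: "j < length bs \<Longrightarrow> k < length bs \<Longrightarrow> j \<noteq> k \<Longrightarrow> bs!j \<inter> bs!k = {}"
proof -
  assume a: "j < length bs" "k < length bs" "j \<noteq> k"
  then have "cs!j \<noteq> cs!k" "(cs!j, r) \<in> t" "(cs!k, r) \<in> t"
    using cs_dist cs_set nth_mem unfolding bs_def by (auto simp: nth_eq_iff_index_eq)
  then show ?thesis using branch_disj a unfolding bs_def by simp
qed

lemma bs_cover: "e \<in> t \<Longrightarrow> \<exists>k<length bs. e \<in> bs!k"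
proof -
  assume e: "e \<in> t"
  obtain u w where "e = (u,w)" by (cases e)
  then obtain c where "(c,r) \<in> t" "e \<in> branch t c" using branch_cover e by blast
  then obtain k where "k < length cs" "cs!k = c" using cs_set by (metis in_set_conv_nth mem_Collect_eq)
  then show ?thesis using \<open>e \<in> branch t c\<close> unfolding bs_def by auto
qed

lemma bs_sub: "k < length bs \<Longrightarrow> bs!k \<subseteq> t"
  unfolding bs_def using branch_sub by simp

lemma bs_closed: "k < length bs \<Longrightarrow> (u,v) \<in> t \<Longrightarrow> (v,p) \<in> bs!k \<Longrightarrow> (u,v) \<in> bs!k"
  unfolding bs_def using branch_closed by simp

lemma decomp_iso: "poset_iso (prodD [t]) (prodD bs)"
proof (rule iso_intro[where f="\<lambda>z. map (\<lambda>b. hd z \<inter> b) bs" and g="\<lambda>ys. [\<Union>(set ys)]"])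
  fix z assume "z \<in> fst (prodD [t])"
  then obtain x where x: "z = [x]" "x \<in> Dset t" unfolding prodD_mem
    by (metis One_nat_def length_0_conv length_Suc_conv less_one nth_Cons_0)
  have "\<forall>k<length bs. x \<inter> bs!k \<in> Dset (bs!k)"
  proof (intro allI impI)
    fix k assume k: "k < length bs"
    show "x \<inter> bs!k \<in> Dset (bs!k)"
      unfolding Dset_def closedE_def
    proof (intro CollectI conjI allI impI)
      fix v p u assume "(v,p) \<in> x \<inter> bs!k" "(u,v) \<in> bs!k"
      then show "(u,v) \<in> x \<inter> bs!k" using x(2) bs_sub[OF k] unfolding Dset_def closedE_def by blast
    qed blast
  qed
  then show "map (\<lambda>b. hd z \<inter> b) bs \<in> fst (prodD bs)" unfolding prodD_mem using x by simp
  have "\<Union>(set (map (\<lambda>b. x \<inter> b) bs)) = x"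
  proof
    show "\<Union>(set (map (\<lambda>b. x \<inter> b) bs)) \<subseteq> x" by auto
    show "x \<subseteq> \<Union>(set (map (\<lambda>b. x \<inter> b) bs))"
    proof
      fix e assume "e \<in> x"
      then have "e \<in> t" using x Dset_sub by blast
      then obtain k where "k < length bs" "e \<in> bs!k" using bs_cover by blast
      then have "bs!k \<in> set bs" by simp
      then show "e \<in> \<Union>(set (map (\<lambda>b. x \<inter> b) bs))" using \<open>e \<in> x\<close> \<open>e \<in> bs!k\<close> by auto
    qed
  qed
  then show "[\<Union>(set (map (\<lambda>b. hd z \<inter> b) bs))] = z" using x by simp
next
  fix ys assume ys: "ys \<in> fst (prodD bs)"
  then have ly: "length ys = length bs" and yD: "\<And>k. k < length bs \<Longrightarrow> ys!k \<in> Dset (bs!k)"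
    unfolding prodD_mem by auto
  have ysub: "\<And>k. k < length bs \<Longrightarrow> ys!k \<subseteq> bs!k" using yD Dset_sub by blast
  have "\<Union>(set ys) \<in> Dset t"
    unfolding Dset_def closedE_def
  proof (intro CollectI conjI allI impI)
    show "\<Union>(set ys) \<subseteq> t" using ysub bs_sub ly by (auto simp: in_set_conv_nth) blast
  next
    fix v p u assume a: "(v,p) \<in> \<Union>(set ys)" "(u,v) \<in> t"
    then obtain k where k: "k < length bs" "(v,p) \<in> ys!k" using ly by (auto simp: in_set_conv_nth)
    then have "(u,v) \<in> bs!k" using bs_closed ysub a by blast
    then have "(u,v) \<in> ys!k" using yD[OF k(1)] k(2) unfolding Dset_def closedE_def by blast
    moreover have "ys!k \<in> set ys" using k ly by simp
    ultimately show "(u,v) \<in> \<Union>(set ys)" by blast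
  qed
  then show "[\<Union>(set ys)] \<in> fst (prodD [t])" unfolding prodD_mem by simp
  have "\<And>k. k < length bs \<Longrightarrow> \<Union>(set ys) \<inter> bs!k = ys!k"
  proof -
    fix k assume k: "k < length bs"
    show "\<Union>(set ys) \<inter> bs!k = ys!k"
    proof
      have "ys!k \<in> set ys" using k ly by simp
      then show "ys!k \<subseteq> \<Union>(set ys) \<inter> bs!k" using ysub[OF k] by blast
      show "\<Union>(set ys) \<inter> bs!k \<subseteq> ys!k"
      proof
        fix e assume "e \<in> \<Union>(set ys) \<inter> bs!k"
        then obtain j where j: "j < length bs" "e \<in> ys!j" "e \<in> bs!k" using ly by (auto simp: in_set_conv_nth)
        then have "e \<in> bs!j" using ysub by blast
        then have "j = k" using bs_disj j k by blast
        then show "e \<in> ys!k" using j by simp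
      qed
    qed
  qed
  then show "map (\<lambda>b. hd [\<Union>(set ys)] \<inter> b) bs = ys" using ly by (simp add: list_eq_iff_nth_eq)
next
  fix z z' assume "z \<in> fst (prodD [t])" "z' \<in> fst (prodD [t])"
  then obtain x x' where x: "z = [x]" "x \<in> Dset t" and x': "z' = [x']" "x' \<in> Dset t" unfolding prodD_mem
    by (metis One_nat_def length_0_conv length_Suc_conv less_one nth_Cons_0)
  have "x \<subseteq> x' \<longleftrightarrow> (\<forall>k<length bs. x \<inter> bs!k \<subseteq> x' \<inter> bs!k)"
  proof
    assume "\<forall>k<length bs. x \<inter> bs!k \<subseteq> x' \<inter> bs!k"
    then show "x \<subseteq> x'" using bs_cover Dset_sub[OF x(2)] by blast
  qed blast
  then show "snd (prodD [t]) z z' = snd (prodD bs) (map (\<lambda>b. hd z \<inter> b) bs) (map (\<lambda>b. hd z' \<inter> b) bs)"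
    unfolding prodD_rel using x x' by simp
qed

lemma exist_one:
  "\<exists>vs. (\<forall>p\<in>set vs. is_tree (fst p) (snd p) \<and> root_valence_one (fst p) (snd p)) \<and>
        poset_iso (prodD [t]) (prodD (map snd vs))"
proof -
  let ?vs = "map (\<lambda>c. (Field (branch t c), branch t c)) cs"
  have "\<forall>p\<in>set ?vs. is_tree (fst p) (snd p) \<and> root_valence_one (fst p) (snd p)"
  proof
    fix p assume "p \<in> set ?vs"
    then obtain c where c: "c \<in> set cs" "p = (Field (branch t c), branch t c)" by auto
    then have "(c,r) \<in> t" using cs_set by blast
    then show "is_tree (fst p) (snd p) \<and> root_valence_one (fst p) (snd p)"
      using branch_tree c(2) by simp
  qed
  moreover have "map snd ?vs = bs" unfolding bs_def by simp
  ultimately show ?thesis using decomp_iso by (intro exI[of _ ?vs]) simp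
qed

end

lemma exist_list:
  assumes "tree_list ts"
  shows "\<exists>vs. (\<forall>p\<in>set vs. is_tree (fst p) (snd p) \<and> root_valence_one (fst p) (snd p)) \<and>
        poset_iso (prodD (map snd ts)) (prodD (map snd vs))"
  using assms
proof (induction ts)
  case Nil
  show ?case by (intro exI[of _ "[]"]) (simp add: iso_refl)
next
  case (Cons p ts)
  then have tp: "is_tree (fst p) (snd p)" and tl: "tree_list ts" unfolding tree_list_def by auto
  obtain vs where vs: "\<forall>p\<in>set vs. is_tree (fst p) (snd p) \<and> root_valence_one (fst p) (snd p)"
    "poset_iso (prodD (map snd ts)) (prodD (map snd vs))" using Cons.IH tl by blast
  obtain r where r: "roots (fst p) (snd p) = {r}" using tree_root[OF tp] by blast
  obtain ws where ws: "\<forall>p\<in>set ws. is_tree (fst p) (snd p) \<and> root_valence_one (fst p) (snd p)"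
    "poset_iso (prodD [snd p]) (prodD (map snd ws))" using exist_one[OF tp r] by blast
  have "poset_iso (prodD ([snd p] @ map snd ts)) (prodD (map snd ws @ map snd vs))"
    using iso_append ws(2) vs(2) by blast
  then have "poset_iso (prodD (map snd (p # ts))) (prodD (map snd (ws @ vs)))" by simp
  moreover have "\<forall>p\<in>set (ws @ vs). is_tree (fst p) (snd p) \<and> root_valence_one (fst p) (snd p)"
    using ws(1) vs(1) by auto
  ultimately show ?case by blast
qed



definition K :: "forest list \<Rightarrow> pclass" where "K fs = cls (prodD fs)"

lemma cls_prodI: "tree_list ts \<Longrightarrow> cls (prodI ts) = K (map snd ts)"
  unfolding K_def using prodI_prodD cls_eq_iff by blast

lemma K_eq: "K fs = K gs \<longleftrightarrow> poset_iso (prodD fs) (prodD gs)"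
  unfolding K_def by (rule cls_eq_iff)

lemma tree_list_append: "tree_list (ts @ ss) \<longleftrightarrow> tree_list ts \<and> tree_list ss"
  unfolding tree_list_def by auto

lemma K_append: "K fs = K fs' \<Longrightarrow> K gs = K gs' \<Longrightarrow> K (fs @ gs) = K (fs' @ gs')"
  unfolding K_eq using iso_append by blast

lemma K_swap: "K (fs @ gs) = K (gs @ fs)"
  unfolding K_eq by (rule iso_swap)

lemma rep_props:
  assumes "tree_list ts"
  shows "tree_list (rep (cls (prodI ts))) \<and> K (map snd (rep (cls (prodI ts)))) = K (map snd ts)"
proof -
  have "\<exists>ts'. tree_list ts' \<and> cls (prodI ts) = cls (prodI ts')" using assms by blast
  then have H: "tree_list (rep (cls (prodI ts))) \<and> cls (prodI ts) = cls (prodI (rep (cls (prodI ts))))"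
    unfolding rep_def by (rule someI_ex)
  then show ?thesis using cls_prodI assms by metis
qed

lemma cls_prod_K:
  assumes "tree_list ts" "tree_list ss"
  shows "cls_prod (cls (prodI ts)) (cls (prodI ss)) = cls (prodI (ts @ ss))"
proof -
  let ?a = "rep (cls (prodI ts))" and ?b = "rep (cls (prodI ss))"
  have a: "tree_list ?a" "K (map snd ?a) = K (map snd ts)" using rep_props[OF assms(1)] by auto
  have b: "tree_list ?b" "K (map snd ?b) = K (map snd ss)" using rep_props[OF assms(2)] by auto
  have "cls_prod (cls (prodI ts)) (cls (prodI ss)) = K (map snd ?a @ map snd ?b)"
    unfolding cls_prod_def using cls_prodI[of "?a @ ?b"] a(1) b(1) tree_list_append by simp
  also have "\<dots> = K (map snd ts @ map snd ss)" using K_append a(2) b(2) by blast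
  also have "\<dots> = cls (prodI (ts @ ss))" using cls_prodI[of "ts @ ss"] assms tree_list_append by simp
  finally show ?thesis .
qed

lemma mset_nth_map: "mset (map F xs) = image_mset (\<lambda>i. F (xs!i)) (mset_set {..<length xs})"
proof -
  have "map F xs = map F (map (nth xs) [0..<length xs])" by (simp add: map_nth)
  then have "mset (map F xs) = image_mset (\<lambda>i. F (xs!i)) (mset [0..<length xs])"
    by (simp only: mset_map map_map comp_def)
  then show ?thesis by (simp only: mset_upt atLeast0LessThan)
qed

lemma mset_bij:
  assumes "bij_betw \<sigma> {..<length xs} {..<length ys}" "\<forall>i<length xs. F (xs!i) = G (ys!(\<sigma> i))"
  shows "mset (map F xs) = mset (map G ys)"
proof -
  have "image_mset (\<lambda>i. F (xs!i)) (mset_set {..<length xs}) =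
        image_mset (\<lambda>i. G (ys!(\<sigma> i))) (mset_set {..<length xs})"
  proof (rule image_mset_cong)
    fix i assume "i \<in># mset_set {..<length xs}"
    then have "i < length xs" by simp
    then show "F (xs!i) = G (ys!(\<sigma> i))" using assms(2) by blast
  qed
  also have "\<dots> = image_mset (\<lambda>j. G (ys!j)) (image_mset \<sigma> (mset_set {..<length xs}))"
    by (simp only: multiset.map_comp comp_def)
  also have "image_mset \<sigma> (mset_set {..<length xs}) = mset_set {..<length ys}"
  proof -
    have "inj_on \<sigma> {..<length xs}" "\<sigma> ` {..<length xs} = {..<length ys}"
      using assms(1) unfolding bij_betw_def by auto
    then show ?thesis using image_mset_mset_set[of \<sigma> "{..<length xs}"] by simp
  qed
  finally show ?thesis by (simp only: mset_nth_map)
qed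

definition Vset :: "(nat set \<times> forest) set" where
  "Vset = {p. is_tree (fst p) (snd p) \<and> root_valence_one (fst p) (snd p)}"

lemma Vset_tree_list: "set ps \<subseteq> Vset \<Longrightarrow> tree_list ps"
  unfolding tree_list_def Vset_def by blast

lemma Vset_good:
  assumes "set ps \<subseteq> Vset" shows "\<forall>t\<in>set (map snd ps). good t"
proof
  fix t assume "t \<in> set (map snd ps)"
  then obtain p where p: "p \<in> set ps" "t = snd p" by auto
  then have "is_tree (fst p) (snd p)" "root_valence_one (fst p) (snd p)" using assms unfolding Vset_def by auto
  then show "good t" using valence_one_good p(2) by blast
qed

lemma K_single: "p \<in> Vset \<Longrightarrow> cls (prodI [p]) = K [snd p]"
  using cls_prodI[of "[p]"] Vset_tree_list[of "[p]"] by simp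

lemma K_unique:
  assumes "set ps \<subseteq> Vset" "set qs \<subseteq> Vset" "K (map snd ps) = K (map snd qs)"
  shows "mset (map (\<lambda>p. K [snd p]) ps) = mset (map (\<lambda>p. K [snd p]) qs)"
proof -
  have "poset_iso (prodD (map snd ps)) (prodD (map snd qs))" using assms(3) K_eq by blast
  then obtain \<sigma> where \<sigma>: "bij_betw \<sigma> {..<length (map snd ps)} {..<length (map snd qs)}"
    "\<forall>i<length (map snd ps). poset_iso (prodD [map snd ps!i]) (prodD [map snd qs!(\<sigma> i)])"
    using uniq Vset_good[OF assms(1)] Vset_good[OF assms(2)] by blast
  have "\<forall>i<length ps. K [snd (ps!i)] = K [snd (qs!(\<sigma> i))]"
  proof (intro allI impI)
    fix i assume i: "i < length ps"
    then have "\<sigma> i < length qs" using \<sigma>(1) unfolding bij_betw_def by auto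
    then have "map snd qs ! (\<sigma> i) = snd (qs ! (\<sigma> i))" by simp
    then show "K [snd (ps!i)] = K [snd (qs!(\<sigma> i))]" using \<sigma>(2) i K_eq by (metis length_map nth_map)
  qed
  then show ?thesis using mset_bij[of \<sigma> ps qs] \<sigma>(1) by simp
qed

lemma K_perm:
  assumes "set ps \<subseteq> Vset" "set qs \<subseteq> Vset"
    "mset (map (\<lambda>p. K [snd p]) ps) = mset (map (\<lambda>p. K [snd p]) qs)"
  shows "K (map snd ps) = K (map snd qs)"
  using assms
proof (induction ps arbitrary: qs)
  case Nil
  then show ?case by simp
next
  case (Cons p ps)
  let ?f = "\<lambda>p. K [snd p]"
  have "K [snd p] \<in># mset (map ?f (p # ps))" by simp
  then have "K [snd p] \<in># mset (map ?f qs)" by (simp only: Cons.prems(3))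
  then have "K [snd p] \<in> set (map ?f qs)" by (simp only: set_mset_mset)
  then obtain q where q: "q \<in> set qs" "K [snd q] = K [snd p]" by auto
  then obtain qs1 qs2 where qs: "qs = qs1 @ q # qs2" by (meson split_list)
  have e1: "mset (map ?f (p#ps)) = add_mset (K [snd p]) (mset (map ?f ps))" by simp
  have e2: "mset (map ?f qs) = add_mset (K [snd p]) (mset (map ?f (qs1 @ qs2)))" using qs q(2) by simp
  have m: "mset (map ?f ps) = mset (map ?f (qs1 @ qs2))"
    using Cons.prems(3) e1 e2 by simp
  have s1: "set ps \<subseteq> Vset" using Cons.prems(1) by simp
  have s2: "set (qs1 @ qs2) \<subseteq> Vset" using Cons.prems(2) qs by auto
  have IH: "K (map snd ps) = K (map snd (qs1 @ qs2))" using Cons.IH[OF s1 s2 m] .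
  have "K (map snd (p # ps)) = K ([snd p] @ map snd ps)" by simp
  also have "\<dots> = K ([snd q] @ map snd (qs1 @ qs2))" by (rule K_append[OF q(2)[symmetric] IH])
  also have "\<dots> = K ([snd q] @ map snd qs1 @ map snd qs2)" by simp
  also have "\<dots> = K ((map snd qs1 @ [snd q]) @ map snd qs2)"
  proof -
    have "K ([snd q] @ map snd qs1) = K (map snd qs1 @ [snd q])" by (rule K_swap)
    then have "K (([snd q] @ map snd qs1) @ map snd qs2) = K ((map snd qs1 @ [snd q]) @ map snd qs2)"
      using K_append by blast
    then show ?thesis by simp
  qed
  also have "\<dots> = K (map snd qs)" using qs by simp
  finally show ?case .
qed



definition gen :: "(nat set \<times> forest) \<Rightarrow> (pclass \<Rightarrow> 'k::field)" where
  "gen p = basisF (cls (prodI [p]))"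

lemma gens_eq: "nap_gens = gen ` Vset"
  unfolding nap_gens_def gen_def Vset_def image_def by (auto; blast)

lemma basisF_inj: "basisF A = (basisF B :: pclass \<Rightarrow> 'k::field) \<Longrightarrow> A = B"
proof -
  assume "basisF A = (basisF B :: pclass \<Rightarrow> 'k::field)"
  then have "basisF A A = (basisF B A :: 'k)" by simp
  then show "A = B" unfolding basisF_def by (cases "A = B") auto
qed

lemma mult_basis: "nap_mult (basisF A) (basisF B) = (basisF (cls_prod A B) :: pclass \<Rightarrow> 'k::field)"
proof
  fix C
  have "{(A', B'). (basisF A A' :: 'k) \<noteq> 0 \<and> (basisF B B' :: 'k) \<noteq> 0 \<and> cls_prod A' B' = C}
        = (if cls_prod A B = C then {(A,B)} else {})"
    unfolding basisF_def by auto
  then show "nap_mult (basisF A) (basisF B) C = (basisF (cls_prod A B) C :: 'k)"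
    unfolding nap_mult_def by (simp add: basisF_def)
qed

lemma foldr_gen:
  assumes "set ps \<subseteq> Vset"
  shows "foldr nap_mult (map gen ps) nap_one = (basisF (cls (prodI ps)) :: pclass \<Rightarrow> 'k::field)"
  using assms
proof (induction ps)
  case Nil
  then show ?case unfolding nap_one_def by simp
next
  case (Cons p ps)
  have tl: "tree_list [p]" "tree_list ps" using Cons.prems Vset_tree_list[of "[p]"] Vset_tree_list[of ps] by auto
  have "foldr nap_mult (map gen (p # ps)) nap_one = nap_mult (gen p) (basisF (cls (prodI ps)) :: pclass \<Rightarrow> 'k)"
    using Cons by simp
  also have "\<dots> = basisF (cls_prod (cls (prodI [p])) (cls (prodI ps)))"
    unfolding gen_def by (rule mult_basis)
  also have "\<dots> = basisF (cls (prodI ([p] @ ps)))" using cls_prod_K[OF tl] by simp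
  finally show ?case by simp
qed

definition PP :: "(pclass \<Rightarrow> 'k::field) \<Rightarrow> (nat set \<times> forest)" where
  "PP g = (SOME p. p \<in> Vset \<and> g = gen p)"

lemma PP_props: "g \<in> nap_gens \<Longrightarrow> PP g \<in> Vset \<and> gen (PP g) = g"
proof -
  assume "g \<in> nap_gens"
  then have "\<exists>p. p \<in> Vset \<and> g = gen p" using gens_eq by blast
  then have "PP g \<in> Vset \<and> g = gen (PP g)" unfolding PP_def by (rule someI_ex)
  then show ?thesis by simp
qed

definition lst :: "'a multiset \<Rightarrow> 'a list" where "lst M = (SOME xs. mset xs = M)"

lemma lst: "mset (lst M) = M"
  unfolding lst_def using ex_mset by (rule someI_ex)

definition monoC :: "(pclass \<Rightarrow> 'k::field) multiset \<Rightarrow> pclass" where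
  "monoC M = cls (prodI (map PP (lst M)))"

lemma mono_props:
  assumes "set_mset M \<subseteq> (nap_gens :: (pclass \<Rightarrow> 'k::field) set)"
  shows "set (map PP (lst M)) \<subseteq> Vset" "map gen (map PP (lst M)) = lst M"
    "monomial_of nap_mult nap_one M = basisF (monoC M)"
proof -
  have s: "set (lst M) \<subseteq> nap_gens" using assms lst by (metis set_mset_mset)
  show 1: "set (map PP (lst M)) \<subseteq> Vset"
  proof
    fix p assume "p \<in> set (map PP (lst M))"
    then obtain g where "g \<in> set (lst M)" "p = PP g" by auto
    then show "p \<in> Vset" using s PP_props by blast
  qed
  have "\<forall>g\<in>set (lst M). gen (PP g) = g" using s PP_props by blast
  then show 2: "map gen (map PP (lst M)) = lst M" by (simp add: map_idI)
  have "monomial_of nap_mult nap_one M = foldr nap_mult (lst M) nap_one"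
    unfolding monomial_of_def lst_def ..
  also have "\<dots> = foldr nap_mult (map gen (map PP (lst M))) nap_one" using 2 by simp
  also have "\<dots> = basisF (monoC M)" unfolding monoC_def using foldr_gen[OF 1] .
  finally show "monomial_of nap_mult nap_one M = basisF (monoC M)" .
qed

definition theta :: "(pclass \<Rightarrow> 'k::field) \<Rightarrow> pclass" where
  "theta g = (SOME C. g = basisF C)"

lemma theta_gen: "p \<in> Vset \<Longrightarrow> theta (gen p :: pclass \<Rightarrow> 'k::field) = K [snd p]"
proof -
  assume p: "p \<in> Vset"
  have "\<exists>C. (gen p :: pclass \<Rightarrow> 'k) = basisF C" unfolding gen_def by blast
  then have "(gen p :: pclass \<Rightarrow> 'k) = basisF (theta (gen p :: pclass \<Rightarrow> 'k))"
    unfolding theta_def by (rule someI_ex)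
  then have "theta (gen p :: pclass \<Rightarrow> 'k) = cls (prodI [p])" unfolding gen_def using basisF_inj by metis
  then show ?thesis using K_single[OF p] by simp
qed

lemma map_theta: "set ps \<subseteq> Vset \<Longrightarrow> map (\<lambda>p. K [snd p]) ps = map theta (map (gen :: _ \<Rightarrow> pclass \<Rightarrow> 'k::field) ps)"
  by (induction ps) (auto simp: theta_gen)

lemma map_theta_inv: "set ps \<subseteq> Vset \<Longrightarrow> map (gen :: _ \<Rightarrow> pclass \<Rightarrow> 'k::field) ps = map basisF (map (\<lambda>p. K [snd p]) ps)"
  by (induction ps) (auto simp: gen_def K_single)

lemma mono_inj:
  assumes "set_mset M \<subseteq> (nap_gens :: (pclass \<Rightarrow> 'k::field) set)" "set_mset M' \<subseteq> (nap_gens :: (pclass \<Rightarrow> 'k::field) set)"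
    "monoC M = monoC M'"
  shows "M = M'"
proof -
  let ?ps = "map PP (lst M)" and ?qs = "map PP (lst M')"
  have v: "set ?ps \<subseteq> Vset" "set ?qs \<subseteq> Vset" using mono_props assms by blast+
  have "K (map snd ?ps) = K (map snd ?qs)"
    using assms(3) cls_prodI Vset_tree_list v unfolding monoC_def by metis
  then have m: "mset (map (\<lambda>p. K [snd p]) ?ps) = mset (map (\<lambda>p. K [snd p]) ?qs)"
    using K_unique v by blast
  have "mset (map (gen :: _ \<Rightarrow> pclass \<Rightarrow> 'k) ?ps) = mset (map (gen :: _ \<Rightarrow> pclass \<Rightarrow> 'k) ?qs)"
  proof -
    have "mset (map (gen :: _ \<Rightarrow> pclass \<Rightarrow> 'k) ?ps) = image_mset basisF (mset (map (\<lambda>p. K [snd p]) ?ps))"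
      unfolding map_theta_inv[OF v(1)] by (rule mset_map)
    also have "\<dots> = image_mset basisF (mset (map (\<lambda>p. K [snd p]) ?qs))" using m by simp
    also have "\<dots> = mset (map (gen :: _ \<Rightarrow> pclass \<Rightarrow> 'k) ?qs)"
      unfolding map_theta_inv[OF v(2)] by (rule mset_map[symmetric])
    finally show ?thesis .
  qed
  then have "mset (lst M) = mset (lst M')" using mono_props(2) assms by metis
  then show ?thesis using lst by metis
qed

lemma mono_surj:
  assumes "C \<in> nap_basis"
  shows "\<exists>M. set_mset M \<subseteq> (nap_gens :: (pclass \<Rightarrow> 'k::field) set) \<and> monoC M = C"
proof -
  obtain ts where ts: "tree_list ts" "C = cls (prodI ts)" using assms unfolding nap_basis_def by blast
  obtain vs where vs: "\<forall>p\<in>set vs. is_tree (fst p) (snd p) \<and> root_valence_one (fst p) (snd p)"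
    "poset_iso (prodD (map snd ts)) (prodD (map snd vs))" using exist_list[OF ts(1)] by blast
  have vV: "set vs \<subseteq> Vset" using vs(1) unfolding Vset_def by auto
  have C: "C = K (map snd vs)" using ts cls_prodI vs(2) K_eq by metis
  define M where "M = mset (map (gen :: _ \<Rightarrow> pclass \<Rightarrow> 'k) vs)"
  have Mg: "set_mset M \<subseteq> (nap_gens :: (pclass \<Rightarrow> 'k) set)" unfolding M_def gens_eq using vV by auto
  let ?ps = "map PP (lst M)"
  have v: "set ?ps \<subseteq> Vset" using mono_props(1)[OF Mg] .
  have "mset (map (gen :: _ \<Rightarrow> pclass \<Rightarrow> 'k) ?ps) = M" using mono_props(2)[OF Mg] lst by simp
  then have "mset (map theta (map (gen :: _ \<Rightarrow> pclass \<Rightarrow> 'k) ?ps)) = mset (map theta (map (gen :: _ \<Rightarrow> pclass \<Rightarrow> 'k) vs))"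
    unfolding M_def by (simp only: mset_map)
  then have "mset (map (\<lambda>p. K [snd p]) ?ps) = mset (map (\<lambda>p. K [snd p]) vs)"
    unfolding map_theta[OF v, where 'k='k] map_theta[OF vV, where 'k='k] .
  then have "K (map snd ?ps) = K (map snd vs)" using K_perm v vV by blast
  then have "monoC M = C" unfolding monoC_def using cls_prodI[OF Vset_tree_list[OF v]] C by simp
  then show ?thesis using Mg by blast
qed

lemma basis_in: "C \<in> nap_basis \<Longrightarrow> (basisF C :: pclass \<Rightarrow> 'k::field) \<in> HNAP"
proof -
  assume C: "C \<in> nap_basis"
  have "{D. (basisF C D :: 'k) \<noteq> 0} = {C}" unfolding basisF_def by auto
  then show ?thesis unfolding HNAP_def using C by simp
qed

lemma monoC_basis: "set_mset M \<subseteq> (nap_gens :: (pclass \<Rightarrow> 'k::field) set) \<Longrightarrow> monoC M \<in> nap_basis"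
  unfolding monoC_def nap_basis_def using mono_props(1) Vset_tree_list by blast

lemma cls_prod_comm: "A \<in> nap_basis \<Longrightarrow> B \<in> nap_basis \<Longrightarrow> cls_prod A B = cls_prod B A"
proof -
  assume "A \<in> nap_basis" "B \<in> nap_basis"
  then obtain ts ss where t: "tree_list ts" "A = cls (prodI ts)" and s: "tree_list ss" "B = cls (prodI ss)"
    unfolding nap_basis_def by blast
  have "cls_prod A B = K (map snd ts @ map snd ss)"
    using cls_prod_K[OF t(1) s(1)] cls_prodI t s tree_list_append by simp
  also have "\<dots> = K (map snd ss @ map snd ts)" by (rule K_swap)
  also have "\<dots> = cls_prod B A"
    using cls_prod_K[OF s(1) t(1)] cls_prodI t s tree_list_append by simp
  finally show ?thesis .
qed

lemma mult_comm:
  assumes "a \<in> (HNAP :: (pclass \<Rightarrow> 'k::field) set)" "b \<in> HNAP"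
  shows "nap_mult a b = nap_mult b a"
proof
  fix C
  let ?S1 = "{(A,B). a A \<noteq> 0 \<and> b B \<noteq> 0 \<and> cls_prod A B = C}"
  let ?S2 = "{(A,B). b A \<noteq> 0 \<and> a B \<noteq> 0 \<and> cls_prod A B = C}"
  have sa: "\<And>A. a A \<noteq> 0 \<Longrightarrow> A \<in> nap_basis" using assms(1) unfolding HNAP_def by blast
  have sb: "\<And>A. b A \<noteq> 0 \<Longrightarrow> A \<in> nap_basis" using assms(2) unfolding HNAP_def by blast
  have "(\<Sum>(A,B)\<in>?S1. a A * b B) = (\<Sum>(A,B)\<in>?S2. b A * a B)"
  proof (rule sum.reindex_bij_witness[of _ prod.swap prod.swap])
    fix x assume "x \<in> ?S2"
    then show "prod.swap (prod.swap x) = x" "prod.swap x \<in> ?S1"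
      using cls_prod_comm sa sb by (auto simp: case_prod_beta)
  next
    fix x assume "x \<in> ?S1"
    then show "prod.swap (prod.swap x) = x" "prod.swap x \<in> ?S2"
      "(case prod.swap x of (A, B) \<Rightarrow> b A * a B) = (case x of (A, B) \<Rightarrow> a A * b B)"
      using cls_prod_comm sa sb by (auto simp: case_prod_beta mult.commute)
  qed
  then show "nap_mult a b C = nap_mult b a C" unfolding nap_mult_def by simp
qed

theorem proposition6p8:
  shows "free_comm_alg_on (HNAP :: (pclass \<Rightarrow> 'k::field) set) nap_mult nap_one nap_gens"
  unfolding free_comm_alg_on_def
proof (intro conjI allI impI ballI)
  fix a b :: "pclass \<Rightarrow> 'k" assume "a \<in> HNAP" "b \<in> HNAP"
  then show "nap_mult a b = nap_mult b a" by (rule mult_comm)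
next
  fix M :: "(pclass \<Rightarrow> 'k) multiset" assume M: "set_mset M \<subseteq> nap_gens"
  then show "monomial_of nap_mult nap_one M \<in> HNAP"
    unfolding mono_props(3)[OF M] using basis_in[OF monoC_basis[OF M]] by simp
next
  fix S and c :: "(pclass \<Rightarrow> 'k) multiset \<Rightarrow> 'k"
  assume H: "finite S \<and> S \<subseteq> {M. set_mset M \<subseteq> nap_gens} \<and>
        (\<lambda>x. \<Sum>M\<in>S. c M * monomial_of nap_mult nap_one M x) = (\<lambda>_. 0)"
  fix M0 assume M0: "M0 \<in> S"
  show "c M0 = 0"
  proof -
    have g0: "set_mset M0 \<subseteq> nap_gens" using H M0 by blast
    have "(\<Sum>M\<in>S. c M * monomial_of nap_mult nap_one M (monoC M0)) = 0"
    proof -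
      have E: "(\<lambda>x. \<Sum>M\<in>S. c M * monomial_of nap_mult nap_one M x) = (\<lambda>_. 0)" using H by blast
      show ?thesis using fun_cong[OF E, of "monoC M0"] by simp
    qed
    moreover have "\<And>M. M \<in> S \<Longrightarrow> c M * monomial_of nap_mult nap_one M (monoC M0) = (if M = M0 then c M else 0)"
    proof -
      fix M assume "M \<in> S"
      then have g: "set_mset M \<subseteq> nap_gens" using H by blast
      have "monoC M0 = monoC M \<longleftrightarrow> M = M0" using mono_inj[OF g0 g] by blast
      then show "c M * monomial_of nap_mult nap_one M (monoC M0) = (if M = M0 then c M else 0)"
        unfolding mono_props(3)[OF g] basisF_def by auto
    qed
    ultimately have "(\<Sum>M\<in>S. (if M = M0 then c M else 0)) = 0" by simp
    then show "c M0 = 0" using H M0 by simp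
  qed
next
  fix h :: "pclass \<Rightarrow> 'k" assume h: "h \<in> HNAP"
  let ?supp = "{C. h C \<noteq> 0}"
  have fin: "finite ?supp" and sub: "?supp \<subseteq> nap_basis" using h unfolding HNAP_def by auto
  define Mc where "Mc C = (SOME M. set_mset M \<subseteq> (nap_gens :: (pclass \<Rightarrow> 'k) set) \<and> monoC M = C)" for C
  have Mc: "\<And>C. C \<in> ?supp \<Longrightarrow> set_mset (Mc C) \<subseteq> nap_gens \<and> monoC (Mc C) = C"
  proof -
    fix C assume "C \<in> ?supp"
    then have "C \<in> nap_basis" using sub by blast
    then have "\<exists>M. set_mset M \<subseteq> (nap_gens :: (pclass \<Rightarrow> 'k) set) \<and> monoC M = C" by (rule mono_surj)
    then show "set_mset (Mc C) \<subseteq> nap_gens \<and> monoC (Mc C) = C" unfolding Mc_def by (rule someI_ex)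
  qed
  have inj: "inj_on Mc ?supp"
  proof (rule inj_onI)
    fix C D assume "C \<in> ?supp" "D \<in> ?supp" "Mc C = Mc D"
    then show "C = D" using Mc by metis
  qed
  define c where "c M = h (monoC M)" for M :: "(pclass \<Rightarrow> 'k) multiset"
  show "\<exists>S c. finite S \<and> S \<subseteq> {M. set_mset M \<subseteq> nap_gens} \<and>
          h = (\<lambda>x. \<Sum>M\<in>S. c M * monomial_of nap_mult nap_one M x)"
  proof (intro exI conjI)
    show "finite (Mc ` ?supp)" using fin by simp
    show "Mc ` ?supp \<subseteq> {M. set_mset M \<subseteq> nap_gens}" using Mc by blast
    show "h = (\<lambda>x. \<Sum>M\<in>Mc ` ?supp. c M * monomial_of nap_mult nap_one M x)"
    proof
      fix x
      have "(\<Sum>M\<in>Mc ` ?supp. c M * monomial_of nap_mult nap_one M x)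
            = (\<Sum>C\<in>?supp. c (Mc C) * monomial_of nap_mult nap_one (Mc C) x)"
        using sum.reindex[OF inj] by simp
      also have "\<dots> = (\<Sum>C\<in>?supp. (if C = x then h C else 0))"
      proof (rule sum.cong)
        fix C assume C: "C \<in> ?supp"
        show "c (Mc C) * monomial_of nap_mult nap_one (Mc C) x = (if C = x then h C else 0)"
        proof -
          have "monomial_of nap_mult nap_one (Mc C) = basisF C"
            using mono_props(3)[of "Mc C"] Mc[OF C] by simp
          then show ?thesis unfolding c_def using Mc[OF C] by (simp add: basisF_def)
        qed
      qed simp
      also have "\<dots> = h x" using fin by (simp add: sum.delta')
      finally show "h x = (\<Sum>M\<in>Mc ` ?supp. c M * monomial_of nap_mult nap_one M x)" by simp
    qed
  qed
qed


end
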